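(* Let $C(x,y,1;1)=\sum_{\nu\in\mathcal{CP}}x^{v(\nu)}y^{h(\nu)}$, let $z_\pm=\frac{1}{1\pm\sqrt{x}}$, and let $$C^{bu}(x,y,1;z)=\frac{xy(1-yz)}{(1-yz)^2-x},\qquad C^{u}(x,y,1;z)=\frac{xy(z_0-z)+\frac{x^2y^2z(1-z)}{(1-yz)^2-x}-\frac{x^2y^2z_0(1-z_0)}{(1-yz_0)^2-x}}{(1-z)(1-yz)+xz},$$ with $z_0=\frac{1+y-x-\sqrt{(1+y-x)^2-4y}}{2y}$. Then \begin{align*} C(x,y,1;1)&=\frac{2xy}{x-(1-y)^2}C^u(x,y,1;1)-\frac{\sqrt{x}y}{(1+\sqrt{x})(1+\sqrt{x}-y)}C^u(x,y,1;z_+)+\frac{\sqrt{x}y}{(1-\sqrt{x})(1-\sqrt{x}-y)}C^u(x,y,1;z_-)\\ &\quad+\frac{xy^2}{2(1+\sqrt{x})(1+\sqrt{x}-y)^2}C^{bu}(x,y,1;z_+)+\frac{xy^2}{2(1-\sqrt{x})(1-\sqrt{x}-y)^2}C^{bu}(x,y,1;z_-)-\frac{x(1-y)y}{x-(1-y)^2}. \end{align*}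
   Context: A cell is a unit square in the plane whose center is an integer point and whose sides are parallel to the axes. A polyomino is a finite set of cells which is connected under edge-adjacency; polyominoes are considered up to translation. A polyomino is convex if each of its columns and each of its rows is a single contiguous block of cells; $\mathcal{CP}$ is the set of nonempty convex polyominoes up to translation. $v(\nu)$ is the number of columns and $h(\nu)$ the number of rows of $\nu$. (The functions $C^{bu}(x,y,1;z)$ and $C^u(x,y,1;z)$ are the generating functions $\sum x^{v(\nu)}y^{h(\nu)}z^{c(\nu)}$ over the classes of convex polyominoes whose column tops are weakly decreasing and column bottoms weakly increasing from left to right, respectively only whose column tops are weakly decreasing, with $c(\nu)$ the number of cells of the leftmost column minus one; the displayed closed forms are used for the substitutions.) *)

theory Defs
  imports "HOL-Analysis.Analysis"
begin

type_synonym cell = "int \<times> int"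

definition edge_adj :: "cell \<Rightarrow> cell \<Rightarrow> bool" where
  "edge_adj p q \<longleftrightarrow> \<bar>fst p - fst q\<bar> + \<bar>snd p - snd q\<bar> = 1"

definition polyomino :: "cell set \<Rightarrow> bool" where
  "polyomino P \<longleftrightarrow> finite P \<and> P \<noteq> {} \<and>
     (\<forall>p\<in>P. \<forall>q\<in>P. (\<lambda>a b. a \<in> P \<and> b \<in> P \<and> edge_adj a b)\<^sup>*\<^sup>* p q)"

definition convex_polyomino :: "cell set \<Rightarrow> bool" where
  "convex_polyomino P \<longleftrightarrow> polyomino P \<and>
     (\<forall>i j1 j2 j. (i, j1) \<in> P \<longrightarrow> (i, j2) \<in> P \<longrightarrow> j1 \<le> j \<longrightarrow> j \<le> j2 \<longrightarrow> (i, j) \<in> P) \<and>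
     (\<forall>j i1 i2 i. (i1, j) \<in> P \<longrightarrow> (i2, j) \<in> P \<longrightarrow> i1 \<le> i \<longrightarrow> i \<le> i2 \<longrightarrow> (i, j) \<in> P)"

text \<open>Canonical representative of a translation class: leftmost column has x = 0,
  bottom row has y = 0.\<close>
definition normalized :: "cell set \<Rightarrow> bool" where
  "normalized P \<longleftrightarrow> (\<forall>p\<in>P. fst p \<ge> 0 \<and> snd p \<ge> 0) \<and>
     (\<exists>p\<in>P. fst p = 0) \<and> (\<exists>p\<in>P. snd p = 0)"

definition CP :: "cell set set" where
  "CP = {P. convex_polyomino P \<and> normalized P}"

definition ncols :: "cell set \<Rightarrow> nat" where "ncols P = card (fst ` P)"
definition nrows :: "cell set \<Rightarrow> nat" where "nrows P = card (snd ` P)"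

definition Cbu :: "real \<Rightarrow> real \<Rightarrow> real \<Rightarrow> real" where
  "Cbu x y z = x * y * (1 - y * z) / ((1 - y * z)^2 - x)"

definition z0 :: "real \<Rightarrow> real \<Rightarrow> real" where
  "z0 x y = (1 + y - x - sqrt ((1 + y - x)^2 - 4 * y)) / (2 * y)"

definition Cu :: "real \<Rightarrow> real \<Rightarrow> real \<Rightarrow> real" where
  "Cu x y z = (x * y * (z0 x y - z)
      + x^2 * y^2 * z * (1 - z) / ((1 - y * z)^2 - x)
      - x^2 * y^2 * z0 x y * (1 - z0 x y) / ((1 - y * z0 x y)^2 - x))
    / ((1 - z) * (1 - y * z) + x * z)"

end

theory Submission
  imports Defs
begin


type_synonym col = "int \<times> int"

definition okc :: "col list \<Rightarrow> bool" where
  "okc L \<longleftrightarrow> (\<forall>i<length L. fst (L!i) \<le> snd (L!i))"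
definition ovl :: "col list \<Rightarrow> bool" where
  "ovl L \<longleftrightarrow> (\<forall>i. Suc i < length L \<longrightarrow> fst (L!Suc i) \<le> snd (L!i) \<and> fst (L!i) \<le> snd (L!Suc i))"
definition nodip :: "col list \<Rightarrow> bool" where
  "nodip L \<longleftrightarrow> (\<forall>a i c. a < i \<longrightarrow> i < c \<longrightarrow> c < length L \<longrightarrow>
      \<not> (snd (L!i) < snd (L!a) \<and> snd (L!i) < snd (L!c)))"
definition nopeak :: "col list \<Rightarrow> bool" where
  "nopeak L \<longleftrightarrow> (\<forall>a i c. a < i \<longrightarrow> i < c \<longrightarrow> c < length L \<longrightarrow>
      \<not> (fst (L!a) < fst (L!i) \<and> fst (L!c) < fst (L!i)))"
definition valid :: "col list \<Rightarrow> bool" where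
  "valid L \<longleftrightarrow> L \<noteq> [] \<and> okc L \<and> ovl L \<and> nodip L \<and> nopeak L"
definition tdec :: "col list \<Rightarrow> bool" where
  "tdec L \<longleftrightarrow> (\<forall>i. Suc i < length L \<longrightarrow> snd (L!Suc i) \<le> snd (L!i))"
definition binc :: "col list \<Rightarrow> bool" where
  "binc L \<longleftrightarrow> (\<forall>i. Suc i < length L \<longrightarrow> fst (L!i) \<le> fst (L!Suc i))"

lemma tdec_mono: "tdec L \<Longrightarrow> i \<le> j \<Longrightarrow> j < length L \<Longrightarrow> snd (L!j) \<le> snd (L!i)"
proof (induction j)
  case 0 then show ?case by simp
next
  case (Suc j)
  show ?case
  proof (cases "i = Suc j")
    case True then show ?thesis by simp
  next
    case False
    then have "snd (L!j) \<le> snd (L!i)" using Suc by auto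
    moreover have "snd (L!Suc j) \<le> snd (L!j)" using Suc.prems unfolding tdec_def by auto
    ultimately show ?thesis by simp
  qed
qed

lemma binc_mono: "binc L \<Longrightarrow> i \<le> j \<Longrightarrow> j < length L \<Longrightarrow> fst (L!i) \<le> fst (L!j)"
proof (induction j)
  case 0 then show ?case by simp
next
  case (Suc j)
  show ?case
  proof (cases "i = Suc j")
    case True then show ?thesis by simp
  next
    case False
    then have "fst (L!i) \<le> fst (L!j)" using Suc by auto
    moreover have "fst (L!j) \<le> fst (L!Suc j)" using Suc.prems unfolding binc_def by auto
    ultimately show ?thesis by simp
  qed
qed

lemma tdec_Cons: "L \<noteq> [] \<Longrightarrow> tdec (c # L) \<longleftrightarrow> snd (hd L) \<le> snd c \<and> tdec L"
  unfolding tdec_def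
  apply (cases L)
   apply simp
  apply (auto simp: nth_Cons split: nat.splits)
  done

lemma binc_Cons: "L \<noteq> [] \<Longrightarrow> binc (c # L) \<longleftrightarrow> fst c \<le> fst (hd L) \<and> binc L"
  unfolding binc_def
  apply (cases L)
   apply simp
  apply (auto simp: nth_Cons split: nat.splits)
  done

lemma not_tdec_least:
  assumes "\<not> tdec L"
  obtains i where "Suc i < length L" "snd (L!i) < snd (L!Suc i)"
    "\<And>j. j < i \<Longrightarrow> snd (L!Suc j) \<le> snd (L!j)"
proof -
  have ex: "\<exists>i. Suc i < length L \<and> snd (L!i) < snd (L!Suc i)"
    using assms unfolding tdec_def by (auto simp: not_le)
  define i where "i = (LEAST i. Suc i < length L \<and> snd (L!i) < snd (L!Suc i))"
  have 1: "Suc i < length L \<and> snd (L!i) < snd (L!Suc i)"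
    unfolding i_def by (rule LeastI_ex[OF ex])
  have 2: "snd (L!Suc j) \<le> snd (L!j)" if "j < i" for j
  proof (rule ccontr)
    assume "\<not> ?thesis"
    then have "Suc j < length L \<and> snd (L!j) < snd (L!Suc j)" using that 1 by auto
    then have "i \<le> j" unfolding i_def by (rule Least_le)
    then show False using that by simp
  qed
  show ?thesis using 1 2 that by blast
qed

lemma prefix_dec: fixes L :: "col list" shows "(\<And>j. j < i \<Longrightarrow> snd (L!Suc j) \<le> snd (L!j)) \<Longrightarrow> snd (L!i) \<le> snd (L!0)"
proof (induction i)
  case (Suc i)
  have "snd (L!Suc i) \<le> snd (L!i)" using Suc.prems by simp
  moreover have "snd (L!i) \<le> snd (L!0)" using Suc by simp
  ultimately show ?case by linarith
qed simp

lemma prefix_inc: fixes L :: "col list" shows "(\<And>j. j < i \<Longrightarrow> fst (L!j) \<le> fst (L!Suc j)) \<Longrightarrow> fst (L!0) \<le> fst (L!i)"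
proof (induction i)
  case (Suc i)
  have "fst (L!i) \<le> fst (L!Suc i)" using Suc.prems by simp
  moreover have "fst (L!0) \<le> fst (L!i)" using Suc by simp
  ultimately show ?case by linarith
qed simp

lemma not_binc_least:
  assumes "\<not> binc L"
  obtains i where "Suc i < length L" "fst (L!Suc i) < fst (L!i)"
    "\<And>j. j < i \<Longrightarrow> fst (L!j) \<le> fst (L!Suc j)"
proof -
  have ex: "\<exists>i. Suc i < length L \<and> fst (L!Suc i) < fst (L!i)"
    using assms unfolding binc_def by (auto simp: not_le)
  define i where "i = (LEAST i. Suc i < length L \<and> fst (L!Suc i) < fst (L!i))"
  have 1: "Suc i < length L \<and> fst (L!Suc i) < fst (L!i)"
    unfolding i_def by (rule LeastI_ex[OF ex])
  have 2: "fst (L!j) \<le> fst (L!Suc j)" if "j < i" for j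
  proof (rule ccontr)
    assume "\<not> ?thesis"
    then have "Suc j < length L \<and> fst (L!Suc j) < fst (L!j)" using that 1 by auto
    then have "i \<le> j" unfolding i_def by (rule Least_le)
    then show False using that by simp
  qed
  show ?thesis using 1 2 that by blast
qed

lemma okc_Cons: "okc (c # L) \<longleftrightarrow> fst c \<le> snd c \<and> okc L"
  unfolding okc_def by (auto simp: nth_Cons less_Suc_eq_0_disj split: nat.splits)

lemma ovl_Cons: "ovl (c # L) \<longleftrightarrow> (L \<noteq> [] \<longrightarrow> fst (hd L) \<le> snd c \<and> fst c \<le> snd (hd L)) \<and> ovl L"
  unfolding ovl_def
  apply (cases L)
   apply simp
  apply (auto simp: nth_Cons split: nat.splits)
  done

lemma nodip_Cons: "nodip (c # L) \<longleftrightarrow> nodip L \<and>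
   (\<forall>i k. i < k \<longrightarrow> k < length L \<longrightarrow> \<not> (snd (L!i) < snd c \<and> snd (L!i) < snd (L!k)))"
proof
  assume h: "nodip (c # L)"
  have "nodip L" unfolding nodip_def
  proof (intro allI impI)
    fix a i k assume "a < i" "i < k" "k < length L"
    then show "\<not> (snd (L!i) < snd (L!a) \<and> snd (L!i) < snd (L!k))"
      using h unfolding nodip_def by (metis Suc_less_eq length_Cons nth_Cons_Suc)
  qed
  moreover have "\<forall>i k. i < k \<longrightarrow> k < length L \<longrightarrow> \<not> (snd (L!i) < snd c \<and> snd (L!i) < snd (L!k))"
  proof (intro allI impI)
    fix i k assume "i < k" "k < length L"
    then show "\<not> (snd (L!i) < snd c \<and> snd (L!i) < snd (L!k))"
      using h unfolding nodip_def
      by (metis Suc_less_eq length_Cons nth_Cons_0 nth_Cons_Suc zero_less_Suc)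
  qed
  ultimately show "nodip L \<and> (\<forall>i k. i < k \<longrightarrow> k < length L \<longrightarrow> \<not> (snd (L!i) < snd c \<and> snd (L!i) < snd (L!k)))"
    by blast
next
  assume h: "nodip L \<and> (\<forall>i k. i < k \<longrightarrow> k < length L \<longrightarrow> \<not> (snd (L!i) < snd c \<and> snd (L!i) < snd (L!k)))"
  show "nodip (c # L)" unfolding nodip_def
  proof (intro allI impI)
    fix a i k assume a: "a < i" "i < k" "k < length (c # L)"
    then obtain i' k' where ik: "i = Suc i'" "k = Suc k'" by (metis Suc_pred' gr_implies_not0 not_gr_zero)
    show "\<not> (snd ((c # L)!i) < snd ((c # L)!a) \<and> snd ((c # L)!i) < snd ((c # L)!k))"
    proof (cases a)
      case 0 then show ?thesis using h a ik by auto
    next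
      case (Suc a') then show ?thesis using h a ik unfolding nodip_def by auto
    qed
  qed
qed

lemma nopeak_Cons: "nopeak (c # L) \<longleftrightarrow> nopeak L \<and>
   (\<forall>i k. i < k \<longrightarrow> k < length L \<longrightarrow> \<not> (fst c < fst (L!i) \<and> fst (L!k) < fst (L!i)))"
proof
  assume h: "nopeak (c # L)"
  have "nopeak L" unfolding nopeak_def
  proof (intro allI impI)
    fix a i k assume "a < i" "i < k" "k < length L"
    then show "\<not> (fst (L!a) < fst (L!i) \<and> fst (L!k) < fst (L!i))"
      using h unfolding nopeak_def by (metis Suc_less_eq length_Cons nth_Cons_Suc)
  qed
  moreover have "\<forall>i k. i < k \<longrightarrow> k < length L \<longrightarrow> \<not> (fst c < fst (L!i) \<and> fst (L!k) < fst (L!i))"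
  proof (intro allI impI)
    fix i k assume "i < k" "k < length L"
    then show "\<not> (fst c < fst (L!i) \<and> fst (L!k) < fst (L!i))"
      using h unfolding nopeak_def
      by (metis Suc_less_eq length_Cons nth_Cons_0 nth_Cons_Suc zero_less_Suc)
  qed
  ultimately show "nopeak L \<and> (\<forall>i k. i < k \<longrightarrow> k < length L \<longrightarrow> \<not> (fst c < fst (L!i) \<and> fst (L!k) < fst (L!i)))"
    by blast
next
  assume h: "nopeak L \<and> (\<forall>i k. i < k \<longrightarrow> k < length L \<longrightarrow> \<not> (fst c < fst (L!i) \<and> fst (L!k) < fst (L!i)))"
  show "nopeak (c # L)" unfolding nopeak_def
  proof (intro allI impI)
    fix a i k assume a: "a < i" "i < k" "k < length (c # L)"
    then obtain i' k' where ik: "i = Suc i'" "k = Suc k'" by (metis Suc_pred' gr_implies_not0 not_gr_zero)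
    show "\<not> (fst ((c # L)!a) < fst ((c # L)!i) \<and> fst ((c # L)!k) < fst ((c # L)!i))"
    proof (cases a)
      case 0 then show ?thesis using h a ik by auto
    next
      case (Suc a') then show ?thesis using h a ik unfolding nopeak_def by auto
    qed
  qed
qed

lemma dipcond:
  fixes L :: "col list"
  assumes "nodip L"
  shows "(\<forall>i k. i < k \<longrightarrow> k < length L \<longrightarrow> \<not> (snd (L!i) < t0 \<and> snd (L!i) < snd (L!k)))
     \<longleftrightarrow> (L \<noteq> [] \<longrightarrow> snd (L!0) < t0 \<longrightarrow> tdec L)"
proof
  assume h: "\<forall>i k. i < k \<longrightarrow> k < length L \<longrightarrow> \<not> (snd (L!i) < t0 \<and> snd (L!i) < snd (L!k))"
  show "L \<noteq> [] \<longrightarrow> snd (L!0) < t0 \<longrightarrow> tdec L"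
  proof (intro impI, rule ccontr)
    assume "L \<noteq> []" "snd (L!0) < t0" "\<not> tdec L"
    obtain i where i: "Suc i < length L" "snd (L!i) < snd (L!Suc i)"
      "\<And>j. j < i \<Longrightarrow> snd (L!Suc j) \<le> snd (L!j)" using \<open>\<not> tdec L\<close> by (rule not_tdec_least) blast
    have "snd (L!i) \<le> snd (L!0)" using i(3) by (rule prefix_dec)
    then show False using h i(1,2) \<open>snd (L!0) < t0\<close> by (metis lessI order_le_less_trans)
  qed
next
  assume h: "L \<noteq> [] \<longrightarrow> snd (L!0) < t0 \<longrightarrow> tdec L"
  show "\<forall>i k. i < k \<longrightarrow> k < length L \<longrightarrow> \<not> (snd (L!i) < t0 \<and> snd (L!i) < snd (L!k))"
  proof (intro allI impI notI)
    fix i k assume ik: "i < k" "k < length L" "snd (L!i) < t0 \<and> snd (L!i) < snd (L!k)"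
    show False
    proof (cases "snd (L!0) < t0")
      case True
      then have "tdec L" using h ik by auto
      then have "snd (L!k) \<le> snd (L!i)" using ik by (intro tdec_mono) auto
      then show False using ik by simp
    next
      case False
      then have "0 < i" using ik by (cases i) auto
      then have "\<not> (snd (L!i) < snd (L!0) \<and> snd (L!i) < snd (L!k))"
        using assms ik unfolding nodip_def by blast
      then show False using ik False by linarith
    qed
  qed
qed

lemma peakcond:
  fixes L :: "col list"
  assumes "nopeak L"
  shows "(\<forall>i k. i < k \<longrightarrow> k < length L \<longrightarrow> \<not> (b0 < fst (L!i) \<and> fst (L!k) < fst (L!i)))
     \<longleftrightarrow> (L \<noteq> [] \<longrightarrow> b0 < fst (L!0) \<longrightarrow> binc L)"
proof
  assume h: "\<forall>i k. i < k \<longrightarrow> k < length L \<longrightarrow> \<not> (b0 < fst (L!i) \<and> fst (L!k) < fst (L!i))"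
  show "L \<noteq> [] \<longrightarrow> b0 < fst (L!0) \<longrightarrow> binc L"
  proof (intro impI, rule ccontr)
    assume "L \<noteq> []" "b0 < fst (L!0)" "\<not> binc L"
    obtain i where i: "Suc i < length L" "fst (L!Suc i) < fst (L!i)"
      "\<And>j. j < i \<Longrightarrow> fst (L!j) \<le> fst (L!Suc j)" using \<open>\<not> binc L\<close> by (rule not_binc_least) blast
    have "fst (L!0) \<le> fst (L!i)" using i(3) by (rule prefix_inc)
    then show False using h i(1,2) \<open>b0 < fst (L!0)\<close> by (metis lessI order_less_le_trans)
  qed
next
  assume h: "L \<noteq> [] \<longrightarrow> b0 < fst (L!0) \<longrightarrow> binc L"
  show "\<forall>i k. i < k \<longrightarrow> k < length L \<longrightarrow> \<not> (b0 < fst (L!i) \<and> fst (L!k) < fst (L!i))"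
  proof (intro allI impI notI)
    fix i k assume ik: "i < k" "k < length L" "b0 < fst (L!i) \<and> fst (L!k) < fst (L!i)"
    show False
    proof (cases "b0 < fst (L!0)")
      case True
      then have "binc L" using h ik by auto
      then have "fst (L!i) \<le> fst (L!k)" using ik by (intro binc_mono) auto
      then show False using ik by simp
    next
      case False
      then have "0 < i" using ik by (cases i) auto
      then have "\<not> (fst (L!0) < fst (L!i) \<and> fst (L!k) < fst (L!i))"
        using assms ik unfolding nopeak_def by blast
      then show False using ik False by linarith
    qed
  qed
qed

lemma valid_Cons:
  assumes "L \<noteq> []"
  shows "valid (c # L) \<longleftrightarrow> valid L \<and> fst c \<le> snd c \<and> fst (hd L) \<le> snd c \<and> fst c \<le> snd (hd L)
     \<and> (snd (hd L) < snd c \<longrightarrow> tdec L) \<and> (fst c < fst (hd L) \<longrightarrow> binc L)"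
proof -
  have hd: "hd L = L!0" using assms by (simp add: hd_conv_nth)
  show ?thesis
    unfolding valid_def okc_Cons ovl_Cons nodip_Cons nopeak_Cons
    using dipcond[of L "snd c"] peakcond[of L "fst c"] assms hd by auto
qed

lemma valid_single: "valid [c] \<longleftrightarrow> fst c \<le> snd c"
  unfolding valid_def okc_def ovl_def nodip_def nopeak_def by auto

definition sh :: "int \<Rightarrow> col list \<Rightarrow> col list" where
  "sh d L = map (\<lambda>(b, t). (b + d, t + d)) L"

fun botmin :: "col list \<Rightarrow> int" where
  "botmin [] = 0"
| "botmin [c] = fst c"
| "botmin (c # L) = min (fst c) (botmin L)"

fun topmax :: "col list \<Rightarrow> int" where
  "topmax [] = 0"
| "topmax [c] = snd c"
| "topmax (c # L) = max (snd c) (topmax L)"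

definition hgt :: "col list \<Rightarrow> nat" where
  "hgt L = nat (topmax L - botmin L + 1)"

definition k0 :: "col list \<Rightarrow> nat" where
  "k0 L = nat (snd (hd L) - fst (hd L) + 1)"

definition nrm :: "col list \<Rightarrow> bool" where
  "nrm L \<longleftrightarrow> L \<noteq> [] \<and> fst (hd L) = 0"

lemma botmin_Cons: "L \<noteq> [] \<Longrightarrow> botmin (c # L) = min (fst c) (botmin L)"
  by (cases L) auto
lemma topmax_Cons: "L \<noteq> [] \<Longrightarrow> topmax (c # L) = max (snd c) (topmax L)"
  by (cases L) auto

lemma botmin_le: "c \<in> set L \<Longrightarrow> botmin L \<le> fst c"
  by (induction L rule: botmin.induct) auto
lemma topmax_ge: "c \<in> set L \<Longrightarrow> snd c \<le> topmax L"
  by (induction L rule: topmax.induct) auto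
lemma botmin_in: "L \<noteq> [] \<Longrightarrow> \<exists>c\<in>set L. botmin L = fst c"
  by (induction L rule: botmin.induct) (auto simp: min_def)
lemma topmax_in: "L \<noteq> [] \<Longrightarrow> \<exists>c\<in>set L. topmax L = snd c"
  by (induction L rule: topmax.induct) (auto simp: max_def)

lemma length_sh[simp]: "length (sh d L) = length L"
  by (simp add: sh_def)
lemma nth_sh[simp]: "i < length L \<Longrightarrow> sh d L ! i = (fst (L!i) + d, snd (L!i) + d)"
  by (simp add: sh_def case_prod_beta)
lemma sh_Cons[simp]: "sh d (c # L) = (fst c + d, snd c + d) # sh d L"
  by (simp add: sh_def case_prod_beta)
lemma sh_Nil[simp]: "sh d [] = []"
  by (simp add: sh_def)
lemma sh_sh[simp]: "sh d (sh e L) = sh (d + e) L"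
  by (induction L) auto
lemma sh_0[simp]: "sh 0 L = L"
  by (induction L) auto
lemma sh_eq_Nil[simp]: "sh d L = [] \<longleftrightarrow> L = []"
  by (simp add: sh_def)
lemma hd_sh: "L \<noteq> [] \<Longrightarrow> hd (sh d L) = (fst (hd L) + d, snd (hd L) + d)"
  by (cases L) auto

lemma botmin_sh[simp]: "L \<noteq> [] \<Longrightarrow> botmin (sh d L) = botmin L + d"
  by (induction L rule: botmin.induct) auto
lemma topmax_sh[simp]: "L \<noteq> [] \<Longrightarrow> topmax (sh d L) = topmax L + d"
  by (induction L rule: topmax.induct) auto
lemma hgt_sh[simp]: "L \<noteq> [] \<Longrightarrow> hgt (sh d L) = hgt L"
  by (simp add: hgt_def)
lemma k0_sh[simp]: "L \<noteq> [] \<Longrightarrow> k0 (sh d L) = k0 L"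
  by (simp add: k0_def hd_sh)

lemma valid_sh[simp]: "valid (sh d L) \<longleftrightarrow> valid L"
  unfolding valid_def okc_def ovl_def nodip_def nopeak_def by auto
lemma tdec_sh[simp]: "tdec (sh d L) \<longleftrightarrow> tdec L"
  unfolding tdec_def by auto
lemma binc_sh[simp]: "binc (sh d L) \<longleftrightarrow> binc L"
  unfolding binc_def by auto

lemma valid_okc: "valid L \<Longrightarrow> c \<in> set L \<Longrightarrow> fst c \<le> snd c"
  unfolding valid_def okc_def by (metis in_set_conv_nth)

lemma tdec_topmax: "tdec L \<Longrightarrow> L \<noteq> [] \<Longrightarrow> topmax L = snd (hd L)"
proof (induction L rule: topmax.induct)
  case (3 c d L)
  then have "tdec (d # L)" "snd d \<le> snd c" using tdec_Cons[of "d # L" c] by auto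
  then show ?case using 3 by auto
qed auto

lemma binc_botmin: "binc L \<Longrightarrow> L \<noteq> [] \<Longrightarrow> botmin L = fst (hd L)"
proof (induction L rule: botmin.induct)
  case (3 c d L)
  then have "binc (d # L)" "fst c \<le> fst d" using binc_Cons[of "d # L" c] by auto
  then show ?case using 3 by auto
qed auto

lemma botmin_le_hd: "L \<noteq> [] \<Longrightarrow> botmin L \<le> fst (hd L)"
  by (rule botmin_le) simp
lemma topmax_ge_hd: "L \<noteq> [] \<Longrightarrow> snd (hd L) \<le> topmax L"
  by (rule topmax_ge) simp

definition add :: "col list \<Rightarrow> int \<times> int \<Rightarrow> col list" where
  "add R p = (0, snd p - fst p) # sh (- fst p) R"

lemma hgt_Cons:
  assumes "R \<noteq> []" "valid R" "fst c \<le> snd c"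
    "snd (hd R) < snd c \<Longrightarrow> topmax R = snd (hd R)"
    "fst c < fst (hd R) \<Longrightarrow> botmin R = fst (hd R)"
  shows "hgt (c # R) = hgt R + nat (snd c - snd (hd R)) + nat (fst (hd R) - fst c)"
proof -
  have "fst (hd R) \<le> snd (hd R)" using assms(1,2) valid_okc by simp
  then have "botmin R \<le> topmax R" using botmin_le_hd[OF assms(1)] topmax_ge_hd[OF assms(1)] by linarith
  have T: "topmax (c # R) = topmax R + int (nat (snd c - snd (hd R)))"
  proof (cases "snd c \<le> snd (hd R)")
    case True then show ?thesis using topmax_ge_hd[OF assms(1)] by (simp add: topmax_Cons[OF assms(1)])
  next
    case False then show ?thesis using assms(4) by (simp add: topmax_Cons[OF assms(1)])
  qed
  have B: "botmin (c # R) = botmin R - int (nat (fst (hd R) - fst c))"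
  proof (cases "fst (hd R) \<le> fst c")
    case True then show ?thesis using botmin_le_hd[OF assms(1)] by (simp add: botmin_Cons[OF assms(1)])
  next
    case False then show ?thesis using assms(5) by (simp add: botmin_Cons[OF assms(1)])
  qed
  have e: "topmax (c # R) - botmin (c # R) + 1 = (topmax R - botmin R + 1) + int (nat (snd c - snd (hd R))) + int (nat (fst (hd R) - fst c))"
    unfolding T B by simp
  show ?thesis unfolding hgt_def e using \<open>botmin R \<le> topmax R\<close> by (simp add: nat_add_distrib)
qed


definition ng :: "col list \<Rightarrow> col list" where
  "ng L = map (\<lambda>(b, t). (- t, - b)) L"

lemma length_ng[simp]: "length (ng L) = length L" by (simp add: ng_def)
lemma nth_ng[simp]: "i < length L \<Longrightarrow> ng L ! i = (- snd (L!i), - fst (L!i))"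
  by (simp add: ng_def case_prod_beta)
lemma ng_Cons[simp]: "ng (c # L) = (- snd c, - fst c) # ng L" by (simp add: ng_def case_prod_beta)
lemma ng_Nil[simp]: "ng [] = []" by (simp add: ng_def)
lemma ng_eq_Nil[simp]: "ng L = [] \<longleftrightarrow> L = []" by (simp add: ng_def)
lemma ng_ng[simp]: "ng (ng L) = L" by (induction L) auto
lemma ng_sh: "ng (sh d L) = sh (- d) (ng L)" by (induction L) auto
lemma valid_ng[simp]: "valid (ng L) \<longleftrightarrow> valid L"
  unfolding valid_def okc_def ovl_def nodip_def nopeak_def by auto
lemma tdec_ng[simp]: "tdec (ng L) \<longleftrightarrow> binc L"
  unfolding tdec_def binc_def by auto
lemma binc_ng[simp]: "binc (ng L) \<longleftrightarrow> tdec L"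
  unfolding tdec_def binc_def by auto
lemma botmin_ng: "botmin (ng L) = - topmax L"
  by (induction L rule: topmax.induct) auto
lemma topmax_ng: "topmax (ng L) = - botmin L"
  by (induction L rule: botmin.induct) auto
lemma hgt_ng[simp]: "hgt (ng L) = hgt L"
  unfolding hgt_def botmin_ng topmax_ng by simp
lemma k0_ng[simp]: "L \<noteq> [] \<Longrightarrow> k0 (ng L) = k0 L"
  by (cases L) (auto simp: k0_def)

definition fl :: "col list \<Rightarrow> col list" where
  "fl L = sh (snd (hd L)) (ng L)"

lemma fl_props:
  assumes "nrm L"
  shows "nrm (fl L)" "fl (fl L) = L" "valid (fl L) \<longleftrightarrow> valid L" "tdec (fl L) \<longleftrightarrow> binc L"
    "binc (fl L) \<longleftrightarrow> tdec L" "hgt (fl L) = hgt L" "k0 (fl L) = k0 L" "length (fl L) = length L"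
proof -
  obtain t L' where L: "L = (0, t) # L'" using assms unfolding nrm_def by (cases L) auto
  show "nrm (fl L)" "valid (fl L) \<longleftrightarrow> valid L" "tdec (fl L) \<longleftrightarrow> binc L"
    "binc (fl L) \<longleftrightarrow> tdec L" "hgt (fl L) = hgt L" "k0 (fl L) = k0 L" "length (fl L) = length L"
    unfolding fl_def L nrm_def by (simp_all del: sh_Cons ng_Cons) (simp_all add: hd_sh)
  show "fl (fl L) = L" unfolding fl_def L by (simp add: ng_sh)
qed

definition CL :: "col list set" where "CL = {L. valid L \<and> nrm L}"
definition UL :: "col list set" where "UL = {L. valid L \<and> nrm L \<and> tdec L}"
definition DL :: "col list set" where "DL = {L. valid L \<and> nrm L \<and> binc L}"
definition BL :: "col list set" where "BL = {L. valid L \<and> nrm L \<and> tdec L \<and> binc L}"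

lemma add_sh: "add R p = sh (- fst p) ((fst p, snd p) # R)"
  unfolding add_def by simp

lemma add_props:
  assumes "nrm R"
  shows "valid (add R p) \<longleftrightarrow> valid R \<and> fst p \<le> snd p \<and> 0 \<le> snd p \<and> fst p \<le> snd (hd R)
            \<and> (snd (hd R) < snd p \<longrightarrow> tdec R) \<and> (fst p < 0 \<longrightarrow> binc R)"
    "tdec (add R p) \<longleftrightarrow> snd (hd R) \<le> snd p \<and> tdec R"
    "binc (add R p) \<longleftrightarrow> fst p \<le> 0 \<and> binc R"
    "nrm (add R p)" "length (add R p) = Suc (length R)"
    "k0 (add R p) = nat (snd p - fst p + 1)"
proof -
  have R: "R \<noteq> []" "fst (hd R) = 0" using assms unfolding nrm_def by auto
  show "valid (add R p) \<longleftrightarrow> valid R \<and> fst p \<le> snd p \<and> 0 \<le> snd p \<and> fst p \<le> snd (hd R)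
            \<and> (snd (hd R) < snd p \<longrightarrow> tdec R) \<and> (fst p < 0 \<longrightarrow> binc R)"
    unfolding add_sh valid_sh using valid_Cons[OF R(1), of "(fst p, snd p)"] R by auto
  show "tdec (add R p) \<longleftrightarrow> snd (hd R) \<le> snd p \<and> tdec R"
    unfolding add_sh tdec_sh using tdec_Cons[OF R(1)] by simp
  show "binc (add R p) \<longleftrightarrow> fst p \<le> 0 \<and> binc R"
    unfolding add_sh binc_sh using binc_Cons[OF R(1)] R by simp
  show "nrm (add R p)" "length (add R p) = Suc (length R)" "k0 (add R p) = nat (snd p - fst p + 1)"
    unfolding add_def nrm_def k0_def by auto
qed

lemma add_inj:
  assumes "nrm R1" "nrm R2" "add R1 p1 = add R2 p2"
  shows "R1 = R2 \<and> p1 = p2"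
proof -
  have h: "snd p1 - fst p1 = snd p2 - fst p2" "sh (- fst p1) R1 = sh (- fst p2) R2"
    using assms(3) unfolding add_def by auto
  have "fst (hd (sh (- fst p1) R1)) = fst (hd (sh (- fst p2) R2))" using h by simp
  then have f: "fst p1 = fst p2" using assms(1,2) unfolding nrm_def by (simp add: hd_sh)
  then have "R1 = R2" using h(2) by (metis add.right_neutral add.right_inverse sh_0 sh_sh)
  then show ?thesis using f h(1) by (simp add: prod_eq_iff)
qed

definition dec :: "col list \<Rightarrow> col list \<times> (int \<times> int)" where
  "dec L = (sh (- fst (hd (tl L))) (tl L), (- fst (hd (tl L)), snd (hd L) - fst (hd (tl L))))"

lemma dec_add: "nrm R \<Longrightarrow> dec (add R p) = (R, p)"
  unfolding dec_def add_def nrm_def by (auto simp: hd_sh)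

lemma add_dec: "nrm L \<Longrightarrow> length L \<ge> 2 \<Longrightarrow> add (fst (dec L)) (snd (dec L)) = L \<and> nrm (fst (dec L))"
  unfolding dec_def add_def nrm_def
  by (cases L; cases "tl L") (auto simp: hd_sh)


lemma has_sum_Sigma_nn:
  fixes f :: "'a \<times> 'b \<Rightarrow> real"
  assumes "\<And>a. a \<in> A \<Longrightarrow> ((\<lambda>b. f (a, b)) has_sum g a) (B a)"
    and "(g has_sum S) A"
    and "\<And>a b. a \<in> A \<Longrightarrow> b \<in> B a \<Longrightarrow> 0 \<le> f (a, b)"
  shows "(f has_sum S) (Sigma A B)"
proof (rule has_sum_SigmaI[OF assms(1,2)])
  show "f summable_on Sigma A B"
    by (rule summable_on_SigmaI[OF assms(1)]) (use assms in \<open>auto intro: has_sum_imp_summable\<close>)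
qed

lemma has_sum_prod_nn:
  fixes f :: "'a \<Rightarrow> real" and g :: "'b \<Rightarrow> real"
  assumes "(f has_sum a) A" "(g has_sum b) B" "\<And>u. u \<in> A \<Longrightarrow> 0 \<le> f u" "\<And>v. v \<in> B \<Longrightarrow> 0 \<le> g v"
  shows "((\<lambda>(u, v). f u * g v) has_sum (a * b)) (A \<times> B)"
proof -
  have "((\<lambda>(u, v). f u * g v) has_sum (a * b)) (Sigma A (\<lambda>_. B))"
  proof (rule has_sum_Sigma_nn[where g = "\<lambda>u. f u * b"])
    show "((\<lambda>v. case (u, v) of (u, v) \<Rightarrow> f u * g v) has_sum f u * b) B" if "u \<in> A" for u
      using has_sum_cmult_right[OF assms(2), of "f u"] by simp
    show "((\<lambda>u. f u * b) has_sum a * b) A" by (rule has_sum_cmult_left[OF assms(1)])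
    show "0 \<le> (case (u, v) of (u, v) \<Rightarrow> f u * g v)" if "u \<in> A" "v \<in> B" for u v
      using assms(3,4) that by simp
  qed
  then show ?thesis by simp
qed

lemma geo_nat:
  fixes q :: real assumes "0 \<le> q" "q < 1"
  shows "((\<lambda>n::nat. q ^ n) has_sum 1 / (1 - q)) UNIV"
  by (rule sums_nonneg_imp_has_sum) (use assms geometric_sums[of q] in auto)

lemma geo_nat1:
  fixes q :: real assumes "0 \<le> q" "q < 1"
  shows "((\<lambda>n::nat. q ^ n) has_sum q / (1 - q)) {1..}"
  by (rule has_sum_geometric_from_1) (use assms in auto)

lemma geo_ge:
  fixes q :: real assumes "0 \<le> q" "q < 1"
  shows "((\<lambda>s::int. q ^ nat (s - t)) has_sum 1 / (1 - q)) {s. t \<le> s}"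
proof -
  have "((\<lambda>n::nat. q ^ n) has_sum 1 / (1 - q)) UNIV" by (rule geo_nat[OF assms])
  also have "?this \<longleftrightarrow> ((\<lambda>s::int. q ^ nat (s - t)) has_sum 1 / (1 - q)) {s. t \<le> s}"
    by (rule has_sum_reindex_bij_witness[where i = "\<lambda>s. nat (s - t)" and j = "\<lambda>n. t + int n"]) auto
  finally show ?thesis .
qed

lemma geo_gt:
  fixes q :: real assumes "0 \<le> q" "q < 1"
  shows "((\<lambda>s::int. q ^ nat (s - t)) has_sum q / (1 - q)) {s. t < s}"
proof -
  have "((\<lambda>n::nat. q ^ n) has_sum q / (1 - q)) {1..}" by (rule geo_nat1[OF assms])
  also have "?this \<longleftrightarrow> ((\<lambda>s::int. q ^ nat (s - t)) has_sum q / (1 - q)) {s. t < s}"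
    by (rule has_sum_reindex_bij_witness[where i = "\<lambda>s. nat (s - t)" and j = "\<lambda>n. t + int n"]) auto
  finally show ?thesis .
qed

lemma geo_le0:
  fixes q :: real assumes "0 \<le> q" "q < 1"
  shows "((\<lambda>s::int. q ^ nat (- s)) has_sum 1 / (1 - q)) {s. s \<le> 0}"
proof -
  have "((\<lambda>n::nat. q ^ n) has_sum 1 / (1 - q)) UNIV" by (rule geo_nat[OF assms])
  also have "?this \<longleftrightarrow> ((\<lambda>s::int. q ^ nat (- s)) has_sum 1 / (1 - q)) {s. s \<le> 0}"
    by (rule has_sum_reindex_bij_witness[where i = "\<lambda>s. nat (- s)" and j = "\<lambda>n. - int n"]) auto
  finally show ?thesis .
qed

lemma geo_lt0:
  fixes q :: real assumes "0 \<le> q" "q < 1"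
  shows "((\<lambda>s::int. q ^ nat (- s)) has_sum q / (1 - q)) {s. s < 0}"
proof -
  have "((\<lambda>n::nat. q ^ n) has_sum q / (1 - q)) {1..}" by (rule geo_nat1[OF assms])
  also have "?this \<longleftrightarrow> ((\<lambda>s::int. q ^ nat (- s)) has_sum q / (1 - q)) {s. s < 0}"
    by (rule has_sum_reindex_bij_witness[where i = "\<lambda>s. nat (- s)" and j = "\<lambda>n. - int n"]) auto
  finally show ?thesis .
qed

definition GS :: "real \<Rightarrow> nat \<Rightarrow> real" where
  "GS z n = (\<Sum>j\<le>n. z ^ j)"

lemma GS_mul: "(1 - z) * GS z n = 1 - z ^ Suc n"
proof (induction n)
  case 0 then show ?case by (simp add: GS_def)
next
  case (Suc n)
  have "GS z (Suc n) = GS z n + z ^ Suc n" by (simp add: GS_def)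
  then have "(1 - z) * GS z (Suc n) = (1 - z) * GS z n + (1 - z) * z ^ Suc n" by (simp add: algebra_simps)
  also have "\<dots> = 1 - z ^ Suc (Suc n)" using Suc by (simp add: algebra_simps)
  finally show ?case .
qed

lemma GS_closed: "z \<noteq> 1 \<Longrightarrow> GS z n = (1 - z ^ Suc n) / (1 - z)"
  using GS_mul[of z n] by (simp add: field_simps)

lemma fin_0t:
  fixes z :: real assumes "0 \<le> t"
  shows "((\<lambda>s::int. z ^ nat s) has_sum GS z (nat t)) {s. 0 \<le> s \<and> s \<le> t}"
proof -
  have "(\<Sum>s\<in>{s. 0 \<le> s \<and> s \<le> t}. z ^ nat s) = (\<Sum>j\<le>nat t. z ^ j)"
    by (rule sum.reindex_bij_witness[where i = "\<lambda>j. int j" and j = "\<lambda>s. nat s"]) (use assms in auto)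
  moreover have "finite {s::int. 0 \<le> s \<and> s \<le> t}" by (rule finite_subset[of _ "{0..t}"]) auto
  ultimately show ?thesis unfolding GS_def by (intro has_sum_finiteI) auto
qed

lemma fin_0t':
  fixes z :: real assumes "0 \<le> t"
  shows "((\<lambda>s::int. z ^ nat (t - s)) has_sum GS z (nat t)) {s. 0 \<le> s \<and> s \<le> t}"
proof -
  have "(\<Sum>s\<in>{s. 0 \<le> s \<and> s \<le> t}. z ^ nat (t - s)) = (\<Sum>j\<le>nat t. z ^ j)"
    by (rule sum.reindex_bij_witness[where i = "\<lambda>j. t - int j" and j = "\<lambda>s. nat (t - s)"]) (use assms in auto)
  moreover have "finite {s::int. 0 \<le> s \<and> s \<le> t}" by (rule finite_subset[of _ "{0..t}"]) auto
  ultimately show ?thesis unfolding GS_def by (intro has_sum_finiteI) auto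
qed

definition PA :: "real \<Rightarrow> nat \<Rightarrow> real" where
  "PA z n = (\<Sum>i\<le>n. GS z i)"

lemma PA_closed: "(1 - z)^2 * PA z n = z ^ (n + 2) - (real n + 2) * z + (real n + 1)"
proof (induction n)
  case 0 then show ?case by (simp add: PA_def GS_def power2_eq_square algebra_simps)
next
  case (Suc n)
  have e1: "(1 - z)^2 * PA z (Suc n) = (1 - z)^2 * PA z n + (1 - z) * ((1 - z) * GS z (Suc n))"
    by (simp add: PA_def algebra_simps power2_eq_square)
  have e2: "(1 - z) * GS z (Suc n) = 1 - z ^ (n + 2)"
    using GS_mul[of z "Suc n"] by simp
  show ?case unfolding e1 e2 Suc by (simp add: algebra_simps)
qed

lemma QA_sum:
  fixes z :: real assumes "0 \<le> t"
  shows "((\<lambda>p. z ^ nat (snd p - fst p)) has_sum PA z (nat t)) {p. 0 \<le> fst p \<and> fst p \<le> snd p \<and> snd p \<le> t}"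
proof -
  have fin: "finite {p::int\<times>int. 0 \<le> fst p \<and> fst p \<le> snd p \<and> snd p \<le> t}"
    by (rule finite_subset[of _ "{0..t} \<times> {0..t}"]) auto
  have "(\<Sum>p\<in>{p::int\<times>int. 0 \<le> fst p \<and> fst p \<le> snd p \<and> snd p \<le> t}. z ^ nat (snd p - fst p))
      = (\<Sum>(i, j)\<in>Sigma {..nat t} (\<lambda>i. {..i}). z ^ j)"
    by (rule sum.reindex_bij_witness[where i = "\<lambda>(i, j). (int i - int j, int i)"
          and j = "\<lambda>p. (nat (snd p), nat (snd p - fst p))"]) (use assms in auto)
  also have "\<dots> = PA z (nat t)"
    unfolding PA_def GS_def by (simp add: sum.Sigma)
  finally show ?thesis using fin by (intro has_sum_finiteI) auto
qed


definition w0 :: "real \<Rightarrow> real \<Rightarrow> col list \<Rightarrow> real" where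
  "w0 x y L = x ^ length L * y ^ hgt L"
definition wz :: "real \<Rightarrow> real \<Rightarrow> real \<Rightarrow> col list \<Rightarrow> real" where
  "wz x y z L = w0 x y L * z ^ (k0 L - 1)"

definition tR :: "col list \<Rightarrow> int" where "tR R = snd (hd R)"

definition QA :: "int \<Rightarrow> (int \<times> int) set" where "QA t = {p. 0 \<le> fst p \<and> fst p \<le> snd p \<and> snd p \<le> t}"
definition QB :: "int \<Rightarrow> (int \<times> int) set" where "QB t = {p. fst p < 0 \<and> 0 \<le> snd p \<and> snd p \<le> t}"
definition QC :: "int \<Rightarrow> (int \<times> int) set" where "QC t = {p. 0 \<le> fst p \<and> fst p \<le> t \<and> t < snd p}"
definition QD :: "int \<Rightarrow> (int \<times> int) set" where "QD t = {p. fst p < 0 \<and> t < snd p}"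
definition QU1 :: "int \<Rightarrow> (int \<times> int) set" where "QU1 t = {p. 0 \<le> fst p \<and> fst p \<le> t \<and> t \<le> snd p}"
definition QU2 :: "int \<Rightarrow> (int \<times> int) set" where "QU2 t = {p. fst p < 0 \<and> t \<le> snd p}"
definition QBU :: "int \<Rightarrow> (int \<times> int) set" where "QBU t = {p. fst p \<le> 0 \<and> t \<le> snd p}"

definition addp :: "col list \<times> (int \<times> int) \<Rightarrow> col list" where "addp q = add (fst q) (snd q)"

definition TC :: "(col list \<times> (int \<times> int)) set" where
  "TC = Sigma CL (\<lambda>R. QA (tR R)) \<union> Sigma DL (\<lambda>R. QB (tR R)) \<union> Sigma UL (\<lambda>R. QC (tR R)) \<union> Sigma BL (\<lambda>R. QD (tR R))"
definition TU :: "(col list \<times> (int \<times> int)) set" where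
  "TU = Sigma UL (\<lambda>R. QU1 (tR R)) \<union> Sigma BL (\<lambda>R. QU2 (tR R))"
definition TB :: "(col list \<times> (int \<times> int)) set" where
  "TB = Sigma BL (\<lambda>R. QBU (tR R))"

lemma CL_tR: "R \<in> CL \<Longrightarrow> 0 \<le> tR R"
  unfolding CL_def tR_def nrm_def using valid_okc[of R "hd R"] by auto

lemma CL_k0: "R \<in> CL \<Longrightarrow> k0 R = nat (tR R) + 1"
  unfolding CL_def tR_def nrm_def k0_def using valid_okc[of R "hd R"] by auto

lemma sub_CL: "UL \<subseteq> CL" "DL \<subseteq> CL" "BL \<subseteq> CL" "BL \<subseteq> UL" "BL \<subseteq> DL"
  unfolding CL_def UL_def DL_def BL_def by auto

lemma setC: "{L \<in> CL. 2 \<le> length L} = addp ` TC"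
proof
  show "{L \<in> CL. 2 \<le> length L} \<subseteq> addp ` TC"
  proof
    fix L assume L: "L \<in> {L \<in> CL. 2 \<le> length L}"
    define R p where "R = fst (dec L)" and "p = snd (dec L)"
    have a: "add R p = L" "nrm R" using add_dec[of L] L unfolding R_def p_def CL_def by auto
    have v: "valid (add R p)" using a L unfolding CL_def by auto
    note vp = add_props(1)[OF a(2), of p, THEN iffD1, OF v]
    have RC: "R \<in> CL" using vp a unfolding CL_def by auto
    have "(R, p) \<in> TC"
      using vp RC a(2) unfolding TC_def CL_def UL_def DL_def BL_def QA_def QB_def QC_def QD_def tR_def nrm_def
      by (cases "snd p \<le> snd (hd R)"; cases "0 \<le> fst p") auto
    then show "L \<in> addp ` TC" using a unfolding addp_def by force
  qed
next
  show "addp ` TC \<subseteq> {L \<in> CL. 2 \<le> length L}"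
  proof
    fix L assume "L \<in> addp ` TC"
    then obtain R p where Rp: "(R, p) \<in> TC" "L = add R p" unfolding addp_def by auto
    have RC: "R \<in> CL" using Rp sub_CL unfolding TC_def by auto
    then have n: "nrm R" "valid R" "0 \<le> tR R" using CL_tR unfolding CL_def by auto
    have "valid (add R p)"
      using Rp(1) n unfolding add_props(1)[OF n(1)]
      unfolding TC_def CL_def UL_def DL_def BL_def QA_def QB_def QC_def QD_def tR_def by auto
    then show "L \<in> {L \<in> CL. 2 \<le> length L}"
      using Rp add_props(4,5)[OF n(1)] n(1) unfolding CL_def nrm_def by (cases R) auto
  qed
qed

lemma setU: "{L \<in> UL. 2 \<le> length L} = addp ` TU"
proof
  show "{L \<in> UL. 2 \<le> length L} \<subseteq> addp ` TU"
  proof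
    fix L assume L: "L \<in> {L \<in> UL. 2 \<le> length L}"
    define R p where "R = fst (dec L)" and "p = snd (dec L)"
    have a: "add R p = L" "nrm R" using add_dec[of L] L unfolding R_def p_def UL_def by auto
    have v: "valid (add R p)" "tdec (add R p)" using a L unfolding UL_def by auto
    note vp = add_props(1)[OF a(2), of p, THEN iffD1, OF v(1)]
    note tp = add_props(2)[OF a(2), of p, THEN iffD1, OF v(2)]
    have "(R, p) \<in> TU"
      using vp tp a(2) unfolding TU_def UL_def BL_def QU1_def QU2_def tR_def nrm_def
      by (cases "0 \<le> fst p") auto
    then show "L \<in> addp ` TU" using a unfolding addp_def by force
  qed
next
  show "addp ` TU \<subseteq> {L \<in> UL. 2 \<le> length L}"
  proof
    fix L assume "L \<in> addp ` TU"
    then obtain R p where Rp: "(R, p) \<in> TU" "L = add R p" unfolding addp_def by auto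
    have RC: "R \<in> CL" using Rp sub_CL unfolding TU_def by auto
    then have n: "nrm R" "valid R" "0 \<le> tR R" using CL_tR unfolding CL_def by auto
    have "valid (add R p)" "tdec (add R p)"
      using Rp(1) n unfolding add_props(1,2)[OF n(1)]
      unfolding TU_def UL_def BL_def QU1_def QU2_def tR_def by auto
    then show "L \<in> {L \<in> UL. 2 \<le> length L}"
      using Rp add_props(4,5)[OF n(1)] n(1) unfolding UL_def nrm_def by (cases R) auto
  qed
qed

lemma setB: "{L \<in> BL. 2 \<le> length L} = addp ` TB"
proof
  show "{L \<in> BL. 2 \<le> length L} \<subseteq> addp ` TB"
  proof
    fix L assume L: "L \<in> {L \<in> BL. 2 \<le> length L}"
    define R p where "R = fst (dec L)" and "p = snd (dec L)"
    have a: "add R p = L" "nrm R" using add_dec[of L] L unfolding R_def p_def BL_def by auto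
    have v: "valid (add R p)" "tdec (add R p)" "binc (add R p)" using a L unfolding BL_def by auto
    note vp = add_props(1)[OF a(2), of p, THEN iffD1, OF v(1)]
    note tp = add_props(2)[OF a(2), of p, THEN iffD1, OF v(2)]
    note bp = add_props(3)[OF a(2), of p, THEN iffD1, OF v(3)]
    have "(R, p) \<in> TB"
      using vp tp bp a(2) unfolding TB_def BL_def QBU_def tR_def nrm_def by auto
    then show "L \<in> addp ` TB" using a unfolding addp_def by force
  qed
next
  show "addp ` TB \<subseteq> {L \<in> BL. 2 \<le> length L}"
  proof
    fix L assume "L \<in> addp ` TB"
    then obtain R p where Rp: "(R, p) \<in> TB" "L = add R p" unfolding addp_def by auto
    have RC: "R \<in> CL" using Rp sub_CL unfolding TB_def by auto
    then have n: "nrm R" "valid R" "0 \<le> tR R" using CL_tR unfolding CL_def by auto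
    have "valid (add R p)" "tdec (add R p)" "binc (add R p)"
      using Rp(1) n unfolding add_props(1,2,3)[OF n(1)]
      unfolding TB_def BL_def QBU_def tR_def by auto
    then show "L \<in> {L \<in> BL. 2 \<le> length L}"
      using Rp add_props(4,5)[OF n(1)] n(1) unfolding BL_def nrm_def by (cases R) auto
  qed
qed

lemma inj_addp: assumes "T \<subseteq> Sigma CL (\<lambda>_. UNIV)" shows "inj_on addp T"
proof (rule inj_onI)
  fix q1 q2 assume "q1 \<in> T" "q2 \<in> T" "addp q1 = addp q2"
  then have "nrm (fst q1)" "nrm (fst q2)" "add (fst q1) (snd q1) = add (fst q2) (snd q2)"
    using assms unfolding CL_def addp_def by auto
  then have "fst q1 = fst q2 \<and> snd q1 = snd q2" by (rule add_inj)
  then show "q1 = q2" by (simp add: prod_eq_iff)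
qed

lemma wz_add:
  assumes "R \<in> CL" "valid (add R p)"
  shows "wz x y z (add R p) = x * w0 x y R * (y ^ (nat (snd p - tR R) + nat (- fst p)) * z ^ nat (snd p - fst p))"
proof -
  have n: "nrm R" "valid R" "R \<noteq> []" "fst (hd R) = 0" using assms(1) unfolding CL_def nrm_def by auto
  note vp = add_props(1)[OF n(1), of p, THEN iffD1, OF assms(2)]
  have h: "hgt (p # R) = hgt R + nat (snd p - snd (hd R)) + nat (fst (hd R) - fst p)"
    by (rule hgt_Cons) (use n vp tdec_topmax binc_botmin in auto)
  have "hgt (add R p) = hgt (sh (- fst p) (p # R))" by (simp only: add_sh prod.collapse)
  also have "\<dots> = hgt (p # R)" by (rule hgt_sh) simp
  finally have "hgt (add R p) = hgt (p # R)" .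
  then have "hgt (add R p) = hgt R + nat (snd p - tR R) + nat (- fst p)" using h n unfolding tR_def by simp
  moreover have "k0 (add R p) - 1 = nat (snd p - fst p)" using add_props(6)[OF n(1)] vp by simp
  moreover have "length (add R p) = Suc (length R)" using add_props(5)[OF n(1)] .
  ultimately show ?thesis unfolding wz_def w0_def by (simp add: power_add)
qed


definition gq :: "real \<Rightarrow> real \<Rightarrow> int \<Rightarrow> int \<times> int \<Rightarrow> real" where
  "gq y z t p = y ^ (nat (snd p - t) + nat (- fst p)) * z ^ nat (snd p - fst p)"

lemma has_sum_diff:
  fixes f g :: "'a \<Rightarrow> real"
  assumes "(f has_sum a) A" "(g has_sum b) A"
  shows "((\<lambda>x. f x - g x) has_sum (a - b)) A"
  using has_sum_add[OF assms(1) has_sum_cmult_right[OF assms(2), of "-1"]] by simp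

lemma wz_nonneg: "0 \<le> x \<Longrightarrow> 0 \<le> y \<Longrightarrow> 0 \<le> z \<Longrightarrow> 0 \<le> wz x y z L"
  unfolding wz_def w0_def by simp
lemma w0_nonneg: "0 \<le> x \<Longrightarrow> 0 \<le> y \<Longrightarrow> 0 \<le> w0 x y L"
  unfolding w0_def by simp

lemma part_sum:
  assumes "Y \<subseteq> CL"
    and inner: "\<And>R. R \<in> Y \<Longrightarrow> ((\<lambda>p. gq y z (tR R) p) has_sum V (tR R)) (Q (tR R))"
    and outer: "((\<lambda>R. x * w0 x y R * V (tR R)) has_sum S) Y"
    and val: "\<And>R p. R \<in> Y \<Longrightarrow> p \<in> Q (tR R) \<Longrightarrow> valid (add R p)"
    and nn: "0 \<le> x" "0 \<le> y" "0 \<le> z"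
  shows "((wz x y z \<circ> addp) has_sum S) (Sigma Y (\<lambda>R. Q (tR R)))"
proof (rule has_sum_Sigma_nn[where g = "\<lambda>R. x * w0 x y R * V (tR R)"])
  fix R assume R: "R \<in> Y"
  have "((\<lambda>p. x * w0 x y R * gq y z (tR R) p) has_sum x * w0 x y R * V (tR R)) (Q (tR R))"
    by (rule has_sum_cmult_right[OF inner[OF R]])
  moreover have "(wz x y z \<circ> addp) (R, p) = x * w0 x y R * gq y z (tR R) p" if "p \<in> Q (tR R)" for p
    using wz_add[of R p x y z] assms(1) R val[OF R that] unfolding addp_def gq_def by auto
  ultimately show "((\<lambda>p. (wz x y z \<circ> addp) (R, p)) has_sum x * w0 x y R * V (tR R)) (Q (tR R))"
    by (subst has_sum_cong) auto
next
  show "((\<lambda>R. x * w0 x y R * V (tR R)) has_sum S) Y" by (rule outer)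
next
  fix R p show "0 \<le> (wz x y z \<circ> addp) (R, p)" using wz_nonneg nn by simp
qed

lemma innerA:
  assumes "0 \<le> t"
  shows "((\<lambda>p. gq y z t p) has_sum PA z (nat t)) (QA t)"
proof -
  have "((\<lambda>p. z ^ nat (snd p - fst p)) has_sum PA z (nat t)) (QA t)"
    using QA_sum[OF assms] unfolding QA_def .
  then show ?thesis by (subst has_sum_cong[where g = "\<lambda>p. z ^ nat (snd p - fst p)"]) (auto simp: gq_def QA_def)
qed

lemma innerB:
  assumes "0 \<le> t" "0 \<le> y" "0 \<le> z" "y * z < 1"
  shows "((\<lambda>p. gq y z t p) has_sum (y * z / (1 - y * z)) * GS z (nat t)) (QB t)"
proof -
  have "((\<lambda>(u, v). (y * z) ^ nat (- u) * z ^ nat v) has_sum (y * z / (1 - y * z)) * GS z (nat t))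
      ({s. s < 0} \<times> {s. 0 \<le> s \<and> s \<le> t})"
    by (rule has_sum_prod_nn[OF geo_lt0 fin_0t]) (use assms in auto)
  moreover have "QB t = {s. s < 0} \<times> {s. 0 \<le> s \<and> s \<le> t}" unfolding QB_def by auto
  moreover have "gq y z t p = (\<lambda>(u, v). (y * z) ^ nat (- u) * z ^ nat v) p" if "p \<in> QB t" for p
  proof -
    have "nat (snd p - fst p) = nat (snd p) + nat (- fst p)" "nat (snd p - t) = 0"
      using that unfolding QB_def by auto
    then show ?thesis unfolding gq_def by (simp add: case_prod_beta power_add power_mult_distrib algebra_simps)
  qed
  ultimately show ?thesis by (subst has_sum_cong) auto
qed

lemma innerC:
  assumes "0 \<le> t" "0 \<le> y" "0 \<le> z" "y * z < 1"
  shows "((\<lambda>p. gq y z t p) has_sum GS z (nat t) * (y * z / (1 - y * z))) (QC t)"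
proof -
  have "((\<lambda>(u, v). z ^ nat (t - u) * (y * z) ^ nat (v - t)) has_sum GS z (nat t) * (y * z / (1 - y * z)))
      ({s. 0 \<le> s \<and> s \<le> t} \<times> {s. t < s})"
    by (rule has_sum_prod_nn[OF fin_0t' geo_gt]) (use assms in auto)
  moreover have "QC t = {s. 0 \<le> s \<and> s \<le> t} \<times> {s. t < s}" unfolding QC_def by auto
  moreover have "gq y z t p = (\<lambda>(u, v). z ^ nat (t - u) * (y * z) ^ nat (v - t)) p" if "p \<in> QC t" for p
  proof -
    have "nat (snd p - fst p) = nat (t - fst p) + nat (snd p - t)" "nat (- fst p) = 0"
      using that unfolding QC_def by auto
    then show ?thesis unfolding gq_def by (simp add: case_prod_beta power_add power_mult_distrib algebra_simps)
  qed
  ultimately show ?thesis by (subst has_sum_cong) auto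
qed

lemma innerU1:
  assumes "0 \<le> t" "0 \<le> y" "0 \<le> z" "y * z < 1"
  shows "((\<lambda>p. gq y z t p) has_sum GS z (nat t) * (1 / (1 - y * z))) (QU1 t)"
proof -
  have "((\<lambda>(u, v). z ^ nat (t - u) * (y * z) ^ nat (v - t)) has_sum GS z (nat t) * (1 / (1 - y * z)))
      ({s. 0 \<le> s \<and> s \<le> t} \<times> {s. t \<le> s})"
    by (rule has_sum_prod_nn[OF fin_0t' geo_ge]) (use assms in auto)
  moreover have "QU1 t = {s. 0 \<le> s \<and> s \<le> t} \<times> {s. t \<le> s}" unfolding QU1_def by auto
  moreover have "gq y z t p = (\<lambda>(u, v). z ^ nat (t - u) * (y * z) ^ nat (v - t)) p" if "p \<in> QU1 t" for p
  proof -
    have "nat (snd p - fst p) = nat (t - fst p) + nat (snd p - t)" "nat (- fst p) = 0"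
      using that unfolding QU1_def by auto
    then show ?thesis unfolding gq_def by (simp add: case_prod_beta power_add power_mult_distrib algebra_simps)
  qed
  ultimately show ?thesis by (subst has_sum_cong) auto
qed

lemma inner_lowhigh:
  assumes "0 \<le> t" "0 \<le> y" "0 \<le> z" "y * z < 1"
    and A: "((\<lambda>u::int. (y * z) ^ nat (- u)) has_sum a) A" and B: "((\<lambda>v::int. (y * z) ^ nat (v - t)) has_sum b) B"
    and Q: "Q = A \<times> B" and QA: "\<And>p. p \<in> Q \<Longrightarrow> fst p \<le> 0 \<and> t \<le> snd p"
  shows "((\<lambda>p. gq y z t p) has_sum a * b * z ^ nat t) Q"
proof -
  have "((\<lambda>(u, v). (y * z) ^ nat (- u) * (y * z) ^ nat (v - t)) has_sum a * b) (A \<times> B)"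
    by (rule has_sum_prod_nn[OF A B]) (use assms in auto)
  then have "((\<lambda>p. (\<lambda>(u, v). (y * z) ^ nat (- u) * (y * z) ^ nat (v - t)) p * z ^ nat t) has_sum a * b * z ^ nat t) (A \<times> B)"
    by (rule has_sum_cmult_left)
  moreover have "gq y z t p = (\<lambda>(u, v). (y * z) ^ nat (- u) * (y * z) ^ nat (v - t)) p * z ^ nat t" if "p \<in> Q" for p
  proof -
    have "nat (snd p - fst p) = nat (- fst p) + nat (snd p - t) + nat t"
      using QA[OF that] assms(1) by auto
    then show ?thesis unfolding gq_def by (simp add: case_prod_beta power_add power_mult_distrib algebra_simps)
  qed
  ultimately show ?thesis using Q by (subst has_sum_cong) auto
qed

lemma innerD:
  assumes "0 \<le> t" "0 \<le> y" "0 \<le> z" "y * z < 1"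
  shows "((\<lambda>p. gq y z t p) has_sum (y * z / (1 - y * z)) * (y * z / (1 - y * z)) * z ^ nat t) (QD t)"
  by (rule inner_lowhigh[OF assms geo_lt0 geo_gt]) (use assms in \<open>auto simp: QD_def\<close>)

lemma innerU2:
  assumes "0 \<le> t" "0 \<le> y" "0 \<le> z" "y * z < 1"
  shows "((\<lambda>p. gq y z t p) has_sum (y * z / (1 - y * z)) * (1 / (1 - y * z)) * z ^ nat t) (QU2 t)"
  by (rule inner_lowhigh[OF assms geo_lt0 geo_ge]) (use assms in \<open>auto simp: QU2_def\<close>)

lemma innerBU:
  assumes "0 \<le> t" "0 \<le> y" "0 \<le> z" "y * z < 1"
  shows "((\<lambda>p. gq y z t p) has_sum (1 / (1 - y * z)) * (1 / (1 - y * z)) * z ^ nat t) (QBU t)"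
  by (rule inner_lowhigh[OF assms geo_le0 geo_ge]) (use assms in \<open>auto simp: QBU_def\<close>)


lemma has_sum_lin:
  fixes f g :: "'a \<Rightarrow> real"
  assumes "(f has_sum a) A" "(g has_sum b) A"
  shows "((\<lambda>x. c * f x + d * g x) has_sum (c * a + d * b)) A"
  by (rule has_sum_add[OF has_sum_cmult_right[OF assms(1)] has_sum_cmult_right[OF assms(2)]])

definition S1 :: "col list set" where "S1 = range (\<lambda>n::nat. [(0, int n)])"

lemma singles:
  assumes "X = CL \<or> X = UL \<or> X = DL \<or> X = BL"
  shows "{L \<in> X. \<not> 2 \<le> length L} = S1"
proof
  show "{L \<in> X. \<not> 2 \<le> length L} \<subseteq> S1"
  proof
    fix L assume L: "L \<in> {L \<in> X. \<not> 2 \<le> length L}"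
    then have "L \<in> CL" using assms sub_CL by auto
    have "length L = 1" using L \<open>L \<in> CL\<close> unfolding CL_def nrm_def by (cases L) (auto simp: Suc_le_eq)
    then obtain c where c0: "L = [c]" by (metis One_nat_def length_0_conv length_Suc_conv)
    then have c: "L = [c]" "fst c = 0" "fst c \<le> snd c" using \<open>L \<in> CL\<close> unfolding CL_def nrm_def
      by (auto simp: valid_single)
    then have "L = [(0, int (nat (snd c)))]" by (cases c) auto
    then show "L \<in> S1" unfolding S1_def by blast
  qed
next
  show "S1 \<subseteq> {L \<in> X. \<not> 2 \<le> length L}"
    using assms unfolding S1_def CL_def UL_def DL_def BL_def nrm_def
    by (auto simp: valid_single tdec_def binc_def)
qed

lemma singles_sum:
  assumes "0 \<le> y" "0 \<le> z" "y * z < 1"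
  shows "(wz x y z has_sum x * y / (1 - y * z)) S1"
proof -
  have "((\<lambda>n::nat. (x * y) * (y * z) ^ n) has_sum (x * y) * (1 / (1 - y * z))) UNIV"
    by (rule has_sum_cmult_right[OF geo_nat]) (use assms in auto)
  also have "?this \<longleftrightarrow> (wz x y z has_sum (x * y) * (1 / (1 - y * z))) S1"
    unfolding S1_def
    by (rule has_sum_reindex_bij_witness[where i = "\<lambda>L. nat (snd (hd L))" and j = "\<lambda>n. [(0, int n)]"])
       (auto simp: wz_def w0_def hgt_def k0_def power_mult_distrib nat_add_distrib)
  finally show ?thesis by simp
qed

lemma split_sum:
  fixes f :: "col list \<Rightarrow> real"
  assumes "(f has_sum a) {L \<in> X. \<not> 2 \<le> length L}" "(f has_sum b) {L \<in> X. 2 \<le> length L}"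
  shows "(f has_sum (a + b)) X"
proof -
  have "X = {L \<in> X. \<not> 2 \<le> length L} \<union> {L \<in> X. 2 \<le> length L}" by auto
  then show ?thesis using has_sum_Un_disjoint[OF assms] by auto
qed

lemma TC_valid: "q \<in> TC \<Longrightarrow> valid (addp q)"
  using setC unfolding CL_def by blast
lemma TU_valid: "q \<in> TU \<Longrightarrow> valid (addp q)"
  using setU unfolding UL_def by blast
lemma TB_valid: "q \<in> TB \<Longrightarrow> valid (addp q)"
  using setB unfolding BL_def by blast

lemma outer_GS:
  assumes "Y \<subseteq> CL" "z \<noteq> 1"
    and h1: "(w0 x y has_sum a1) Y" and hz: "(wz x y z has_sum az) Y"
  shows "((\<lambda>R. x * w0 x y R * (c * GS z (nat (tR R)))) has_sum (x * c / (1 - z) * (a1 - z * az))) Y"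
proof -
  define K where "K = x * c / (1 - z)"
  define A B where "A = K" and "B = - (K * z)"
  have H: "((\<lambda>R. A * w0 x y R + B * wz x y z R) has_sum (A * a1 + B * az)) Y"
    by (rule has_sum_lin[OF h1 hz])
  have v: "A * a1 + B * az = x * c / (1 - z) * (a1 - z * az)" unfolding A_def B_def K_def[symmetric]
    by (simp add: algebra_simps)
  have eq: "x * w0 x y R * (c * GS z (nat (tR R))) = A * w0 x y R + B * wz x y z R"
    if "R \<in> Y" for R
  proof -
    have k: "k0 R - 1 = nat (tR R)" using CL_k0[of R] that assms(1) by auto
    have "x * w0 x y R * (c * ((1 - z ^ Suc (nat (tR R))) / (1 - z))) = K * (w0 x y R * (1 - z ^ Suc (nat (tR R))))"
      unfolding K_def by (simp add: mult_ac)
    also have "\<dots> = A * w0 x y R + B * (w0 x y R * z ^ nat (tR R))"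
      unfolding A_def B_def by (simp add: algebra_simps)
    finally show ?thesis unfolding wz_def GS_closed[OF assms(2)] k .
  qed
  show ?thesis using H[unfolded v] by (subst has_sum_cong[OF eq]) auto
qed

lemma outer_pow:
  assumes "Y \<subseteq> CL" and hz: "(wz x y z has_sum az) Y"
  shows "((\<lambda>R. x * w0 x y R * (c * z ^ nat (tR R))) has_sum (x * c * az)) Y"
proof -
  have "((\<lambda>R. (x * c) * wz x y z R) has_sum (x * c) * az) Y" by (rule has_sum_cmult_right[OF hz])
  moreover have "x * w0 x y R * (c * z ^ nat (tR R)) = (x * c) * wz x y z R" if "R \<in> Y" for R
  proof -
    have "k0 R - 1 = nat (tR R)" using CL_k0[of R] that assms(1) by auto
    then show ?thesis unfolding wz_def by simp
  qed
  ultimately show ?thesis by (subst has_sum_cong) auto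
qed

lemma outer_PA:
  assumes Y: "Y \<subseteq> CL" and "z \<noteq> 1"
    and h1: "(w0 x y has_sum C1) Y" and hz: "(wz x y z has_sum Cz) Y"
    and hM: "((\<lambda>L. w0 x y L * real (k0 L)) has_sum M) Y"
  shows "((\<lambda>R. x * w0 x y R * PA z (nat (tR R))) has_sum (x * (z^2 * Cz - z * (M + C1) + M) / (1 - z)^2)) Y"
proof -
  define c where "c = x / (1 - z)^2"
  have H0: "((\<lambda>R. (1 - z) * (w0 x y R * real (k0 R)) + (- z) * w0 x y R) has_sum ((1 - z) * M + (- z) * C1)) Y"
    by (rule has_sum_lin[OF hM h1])
  have H1: "((\<lambda>R. (c * z^2) * wz x y z R + c * ((1 - z) * (w0 x y R * real (k0 R)) + (- z) * w0 x y R)) has_sum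
      ((c * z^2) * Cz + c * ((1 - z) * M + (- z) * C1))) Y"
    by (rule has_sum_lin[OF hz H0])
  then have H: "((\<lambda>R. (c * z^2) * wz x y z R + c * ((1 - z) * (w0 x y R * real (k0 R)) - z * w0 x y R)) has_sum
      ((c * z^2) * Cz + c * ((1 - z) * M - z * C1))) Y" by simp
  have eq: "x * w0 x y R * PA z (nat (tR R)) = (c * z^2) * wz x y z R + c * ((1 - z) * (w0 x y R * real (k0 R)) - z * w0 x y R)"
    if "R \<in> Y" for R
  proof -
    define n where "n = nat (tR R)"
    have k: "k0 R = n + 1" using CL_k0[of R] that Y unfolding n_def by auto
    have nz: "(1 - z)^2 \<noteq> 0" using assms(2) by simp
    have "PA z n = (z ^ (n + 2) - (real n + 2) * z + (real n + 1)) / (1 - z)^2"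
      using PA_closed[of z n] nz by (simp add: field_simps)
    then have e1: "x * w0 x y R * PA z n = c * (w0 x y R * (z ^ (n + 2) - (real n + 2) * z + (real n + 1)))"
      unfolding c_def by (simp add: field_simps)
    have e2: "(c * z^2) * wz x y z R + c * ((1 - z) * (w0 x y R * real (k0 R)) - z * w0 x y R)
        = c * (w0 x y R * (z ^ (n + 2) - (real n + 2) * z + (real n + 1)))"
      unfolding wz_def k by (simp add: power_add algebra_simps power2_eq_square)
    show ?thesis using e1 e2 unfolding n_def by simp
  qed
  have "(1 - z)^2 \<noteq> 0" using assms(2) by simp
  then have "(c * z^2) * Cz + c * ((1 - z) * M - z * C1) = x * (z^2 * Cz - z * (M + C1) + M) / (1 - z)^2"
    unfolding c_def by (simp add: field_simps)
  then show ?thesis using H by (subst has_sum_cong[OF eq]) auto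
qed


lemma reindex_addp:
  assumes "T \<subseteq> Sigma CL (\<lambda>_. UNIV)" "((wz x y z \<circ> addp) has_sum S) T"
  shows "(wz x y z has_sum S) (addp ` T)"
  using has_sum_reindex[OF inj_addp[OF assms(1)], of "wz x y z" S] assms(2) by blast

lemma eqC:
  assumes nn: "0 \<le> x" "0 \<le> y" "0 \<le> z" "y * z < 1" "z \<noteq> 1"
    and hCz: "(wz x y z has_sum Cz) CL" and hC1: "(w0 x y has_sum C1) CL"
    and hM: "((\<lambda>L. w0 x y L * real (k0 L)) has_sum M) CL"
    and hUz: "(wz x y z has_sum Uz) UL" and hU1: "(w0 x y has_sum U1) UL"
    and hDz: "(wz x y z has_sum Dz) DL" and hD1: "(w0 x y has_sum D1) DL"
    and hBz: "(wz x y z has_sum Bz) BL"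
  shows "Cz = x * y / (1 - y * z) + x * (z^2 * Cz - z * (M + C1) + M) / (1 - z)^2
     + x * (y * z / (1 - y * z)) / (1 - z) * (D1 - z * Dz)
     + x * (y * z / (1 - y * z)) / (1 - z) * (U1 - z * Uz)
     + x * ((y * z / (1 - y * z)) * (y * z / (1 - y * z))) * Bz"
proof -
  define c where "c = y * z / (1 - y * z)"
  have val: "valid (add R p)" if "(R, p) \<in> TC" for R p using TC_valid[OF that] unfolding addp_def by simp
  have iA: "((\<lambda>p. gq y z (tR R) p) has_sum PA z (nat (tR R))) (QA (tR R))" if "R \<in> CL" for R
    by (rule innerA[OF CL_tR[OF that]])
  have iB: "((\<lambda>p. gq y z (tR R) p) has_sum c * GS z (nat (tR R))) (QB (tR R))" if "R \<in> DL" for R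
    using innerB[OF CL_tR nn(2,3,4), of R] that sub_CL unfolding c_def by blast
  have iC: "((\<lambda>p. gq y z (tR R) p) has_sum c * GS z (nat (tR R))) (QC (tR R))" if "R \<in> UL" for R
    using innerC[OF CL_tR nn(2,3,4), of R] that sub_CL unfolding c_def by (simp only: mult.commute) blast
  have iD: "((\<lambda>p. gq y z (tR R) p) has_sum (c * c) * z ^ nat (tR R)) (QD (tR R))" if "R \<in> BL" for R
    using innerD[OF CL_tR nn(2,3,4), of R] that sub_CL unfolding c_def by blast
  have vA: "valid (add R p)" if "R \<in> CL" "p \<in> QA (tR R)" for R p using val that unfolding TC_def by blast
  have vB: "valid (add R p)" if "R \<in> DL" "p \<in> QB (tR R)" for R p using val that unfolding TC_def by blast
  have vC: "valid (add R p)" if "R \<in> UL" "p \<in> QC (tR R)" for R p using val that unfolding TC_def by blast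
  have vD: "valid (add R p)" if "R \<in> BL" "p \<in> QD (tR R)" for R p using val that unfolding TC_def by blast
  note pA = part_sum[OF order_refl iA outer_PA[OF order_refl nn(5) hC1 hCz hM] vA nn(1-3)]
  note pB = part_sum[OF sub_CL(2) iB outer_GS[OF sub_CL(2) nn(5) hD1 hDz, of c] vB nn(1-3)]
  note pC = part_sum[OF sub_CL(1) iC outer_GS[OF sub_CL(1) nn(5) hU1 hUz, of c] vC nn(1-3)]
  note pD = part_sum[OF sub_CL(3) iD outer_pow[OF sub_CL(3) hBz, of "c * c"] vD nn(1-3)]
  have "((wz x y z \<circ> addp) has_sum
      (x * (z^2 * Cz - z * (M + C1) + M) / (1 - z)^2 + x * c / (1 - z) * (D1 - z * Dz)
        + x * c / (1 - z) * (U1 - z * Uz) + x * (c * c) * Bz)) TC"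
    unfolding TC_def
    by (intro has_sum_Un_disjoint pA pB pC pD) (auto simp: QA_def QB_def QC_def QD_def)
  then have s2: "(wz x y z has_sum
      (x * (z^2 * Cz - z * (M + C1) + M) / (1 - z)^2 + x * c / (1 - z) * (D1 - z * Dz)
        + x * c / (1 - z) * (U1 - z * Uz) + x * (c * c) * Bz)) {L \<in> CL. 2 \<le> length L}"
    unfolding setC by (intro reindex_addp) (use sub_CL in \<open>auto simp: TC_def\<close>)
  have s1: "(wz x y z has_sum x * y / (1 - y * z)) {L \<in> CL. \<not> 2 \<le> length L}"
    using singles_sum[OF nn(2,3,4)] singles[of CL] by simp
  have "(wz x y z has_sum (x * y / (1 - y * z) + (x * (z^2 * Cz - z * (M + C1) + M) / (1 - z)^2 + x * c / (1 - z) * (D1 - z * Dz)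
        + x * c / (1 - z) * (U1 - z * Uz) + x * (c * c) * Bz))) CL"
    using split_sum[OF s1 s2] by simp
  from has_sum_unique[OF hCz this] show ?thesis unfolding c_def by simp
qed

lemma eqU:
  assumes nn: "0 \<le> x" "0 \<le> y" "0 \<le> z" "y * z < 1" "z \<noteq> 1"
    and hUz: "(wz x y z has_sum Uz) UL" and hU1: "(w0 x y has_sum U1) UL"
    and hBz: "(wz x y z has_sum Bz) BL"
  shows "Uz = x * y / (1 - y * z) + x * (1 / (1 - y * z)) / (1 - z) * (U1 - z * Uz)
     + x * ((y * z / (1 - y * z)) * (1 / (1 - y * z))) * Bz"
proof -
  define c where "c = 1 / (1 - y * z)"
  define d where "d = y * z / (1 - y * z)"
  have val: "valid (add R p)" if "(R, p) \<in> TU" for R p using TU_valid[OF that] unfolding addp_def by simp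
  have i1: "((\<lambda>p. gq y z (tR R) p) has_sum c * GS z (nat (tR R))) (QU1 (tR R))" if "R \<in> UL" for R
    using innerU1[OF CL_tR nn(2,3,4), of R] that sub_CL unfolding c_def by (simp only: mult.commute) blast
  have i2: "((\<lambda>p. gq y z (tR R) p) has_sum (d * c) * z ^ nat (tR R)) (QU2 (tR R))" if "R \<in> BL" for R
    using innerU2[OF CL_tR nn(2,3,4), of R] that sub_CL unfolding c_def d_def by blast
  have v1: "valid (add R p)" if "R \<in> UL" "p \<in> QU1 (tR R)" for R p using val that unfolding TU_def by blast
  have v2: "valid (add R p)" if "R \<in> BL" "p \<in> QU2 (tR R)" for R p using val that unfolding TU_def by blast
  note p1 = part_sum[OF sub_CL(1) i1 outer_GS[OF sub_CL(1) nn(5) hU1 hUz, of c] v1 nn(1-3)]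
  note p2 = part_sum[OF sub_CL(3) i2 outer_pow[OF sub_CL(3) hBz, of "d * c"] v2 nn(1-3)]
  have "((wz x y z \<circ> addp) has_sum (x * c / (1 - z) * (U1 - z * Uz) + x * (d * c) * Bz)) TU"
    unfolding TU_def
    by (intro has_sum_Un_disjoint p1 p2) (auto simp: QU1_def QU2_def)
  then have s2: "(wz x y z has_sum (x * c / (1 - z) * (U1 - z * Uz) + x * (d * c) * Bz)) {L \<in> UL. 2 \<le> length L}"
    unfolding setU by (intro reindex_addp) (use sub_CL in \<open>auto simp: TU_def\<close>)
  have s1: "(wz x y z has_sum x * y / (1 - y * z)) {L \<in> UL. \<not> 2 \<le> length L}"
    using singles_sum[OF nn(2,3,4)] singles[of UL] by simp
  have "(wz x y z has_sum (x * y / (1 - y * z) + (x * c / (1 - z) * (U1 - z * Uz) + x * (d * c) * Bz))) UL"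
    using split_sum[OF s1 s2] by simp
  from has_sum_unique[OF hUz this] show ?thesis unfolding c_def d_def by simp
qed

lemma eqB:
  assumes nn: "0 \<le> x" "0 \<le> y" "0 \<le> z" "y * z < 1"
    and hBz: "(wz x y z has_sum Bz) BL"
  shows "Bz = x * y / (1 - y * z) + x * ((1 / (1 - y * z)) * (1 / (1 - y * z))) * Bz"
proof -
  define c where "c = 1 / (1 - y * z)"
  have val: "valid (add R p)" if "(R, p) \<in> TB" for R p using TB_valid[OF that] unfolding addp_def by simp
  have i1: "((\<lambda>p. gq y z (tR R) p) has_sum (c * c) * z ^ nat (tR R)) (QBU (tR R))" if "R \<in> BL" for R
    using innerBU[OF CL_tR nn(2,3,4), of R] that sub_CL unfolding c_def by blast
  have v1: "valid (add R p)" if "R \<in> BL" "p \<in> QBU (tR R)" for R p using val that unfolding TB_def by blast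
  note p1 = part_sum[OF sub_CL(3) i1 outer_pow[OF sub_CL(3) hBz, of "c * c"] v1 nn(1-3)]
  then have s2: "(wz x y z has_sum (x * (c * c) * Bz)) {L \<in> BL. 2 \<le> length L}"
    unfolding setB TB_def[symmetric] by (intro reindex_addp) (use sub_CL in \<open>auto simp: TB_def\<close>)
  have s1: "(wz x y z has_sum x * y / (1 - y * z)) {L \<in> BL. \<not> 2 \<le> length L}"
    using singles_sum[OF nn(2,3,4)] singles[of BL] by simp
  have "(wz x y z has_sum (x * y / (1 - y * z) + x * (c * c) * Bz)) BL"
    using split_sum[OF s1 s2] by simp
  from has_sum_unique[OF hBz this] show ?thesis unfolding c_def by simp
qed


definition TCg :: "col list set \<Rightarrow> col list set \<Rightarrow> col list set \<Rightarrow> col list set \<Rightarrow> (col list \<times> (int \<times> int)) set" where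
  "TCg A B C D = Sigma A (\<lambda>R. QA (tR R)) \<union> Sigma B (\<lambda>R. QB (tR R)) \<union> Sigma C (\<lambda>R. QC (tR R)) \<union> Sigma D (\<lambda>R. QD (tR R))"

lemma TC_TCg: "TC = TCg CL DL UL BL" unfolding TC_def TCg_def ..

lemma sumTCg:
  assumes nn: "0 \<le> x" "0 \<le> y" "0 \<le> z" "y * z < 1" "z \<noteq> 1"
    and sub: "A \<subseteq> CL" "B \<subseteq> DL" "C \<subseteq> UL" "D \<subseteq> BL"
    and hCz: "(wz x y z has_sum Cz) A" and hC1: "(w0 x y has_sum C1) A"
    and hM: "((\<lambda>L. w0 x y L * real (k0 L)) has_sum M) A"
    and hUz: "(wz x y z has_sum Uz) C" and hU1: "(w0 x y has_sum U1) C"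
    and hDz: "(wz x y z has_sum Dz) B" and hD1: "(w0 x y has_sum D1) B"
    and hBz: "(wz x y z has_sum Bz) D"
  shows "((wz x y z \<circ> addp) has_sum
      (x * (z^2 * Cz - z * (M + C1) + M) / (1 - z)^2 + x * (y * z / (1 - y * z)) / (1 - z) * (D1 - z * Dz)
        + x * (y * z / (1 - y * z)) / (1 - z) * (U1 - z * Uz) + x * ((y * z / (1 - y * z)) * (y * z / (1 - y * z))) * Bz)) (TCg A B C D)"
proof -
  define c where "c = y * z / (1 - y * z)"
  have subs: "A \<subseteq> CL" "B \<subseteq> CL" "C \<subseteq> CL" "D \<subseteq> CL" using sub sub_CL by auto
  have val: "valid (add R p)" if "(R, p) \<in> TC" for R p using TC_valid[OF that] unfolding addp_def by simp
  have iA: "((\<lambda>p. gq y z (tR R) p) has_sum PA z (nat (tR R))) (QA (tR R))" if "R \<in> A" for R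
    by (rule innerA[OF CL_tR]) (use that subs in auto)
  have iB: "((\<lambda>p. gq y z (tR R) p) has_sum c * GS z (nat (tR R))) (QB (tR R))" if "R \<in> B" for R
    using innerB[OF CL_tR nn(2,3,4), of R] that subs unfolding c_def by blast
  have iC: "((\<lambda>p. gq y z (tR R) p) has_sum c * GS z (nat (tR R))) (QC (tR R))" if "R \<in> C" for R
    using innerC[OF CL_tR nn(2,3,4), of R] that subs unfolding c_def by (simp only: mult.commute) blast
  have iD: "((\<lambda>p. gq y z (tR R) p) has_sum (c * c) * z ^ nat (tR R)) (QD (tR R))" if "R \<in> D" for R
    using innerD[OF CL_tR nn(2,3,4), of R] that subs unfolding c_def by blast
  have vA: "valid (add R p)" if "R \<in> A" "p \<in> QA (tR R)" for R p using val that sub unfolding TC_def by blast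
  have vB: "valid (add R p)" if "R \<in> B" "p \<in> QB (tR R)" for R p using val that sub unfolding TC_def by blast
  have vC: "valid (add R p)" if "R \<in> C" "p \<in> QC (tR R)" for R p using val that sub unfolding TC_def by blast
  have vD: "valid (add R p)" if "R \<in> D" "p \<in> QD (tR R)" for R p using val that sub unfolding TC_def by blast
  note pA = part_sum[OF subs(1) iA outer_PA[OF subs(1) nn(5) hC1 hCz hM] vA nn(1-3)]
  note pB = part_sum[OF subs(2) iB outer_GS[OF subs(2) nn(5) hD1 hDz, of c] vB nn(1-3)]
  note pC = part_sum[OF subs(3) iC outer_GS[OF subs(3) nn(5) hU1 hUz, of c] vC nn(1-3)]
  note pD = part_sum[OF subs(4) iD outer_pow[OF subs(4) hBz, of "c * c"] vD nn(1-3)]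
  show ?thesis
    unfolding TCg_def c_def[symmetric]
    by (intro has_sum_Un_disjoint pA pB pC pD) (auto simp: QA_def QB_def QC_def QD_def)
qed

definition lenr :: "col list set \<Rightarrow> nat \<Rightarrow> col list set" where
  "lenr X m = {L \<in> X. length L = m}"

lemma TCg_len: "TCg (lenr CL m) (lenr DL m) (lenr UL m) (lenr BL m) = {q \<in> TC. length (fst q) = m}"
  unfolding TCg_def TC_def lenr_def by auto

lemma addp_len: "q \<in> TC \<Longrightarrow> length (addp q) = Suc (length (fst q))"
  unfolding addp_def TC_def CL_def UL_def DL_def BL_def by (cases q) (auto simp: add_props(5))

lemma set_len: "1 \<le> m \<Longrightarrow> lenr CL (Suc m) = addp ` TCg (lenr CL m) (lenr DL m) (lenr UL m) (lenr BL m)"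
proof -
  assume m: "1 \<le> m"
  have "lenr CL (Suc m) = {L \<in> {L \<in> CL. 2 \<le> length L}. length L = Suc m}" unfolding lenr_def using m by auto
  also have "\<dots> = {L \<in> addp ` TC. length L = Suc m}" unfolding setC ..
  also have "\<dots> = addp ` {q \<in> TC. length (fst q) = m}" using addp_len by force
  finally show ?thesis unfolding TCg_len .
qed

lemma len1: "L \<noteq> [] \<Longrightarrow> \<not> 2 \<le> length L \<Longrightarrow> length L = 1"
proof -
  assume "L \<noteq> []" "\<not> 2 \<le> length L"
  moreover have "0 < length L" using \<open>L \<noteq> []\<close> by simp
  ultimately show "length L = 1" by linarith
qed

lemma lenr1: "lenr CL 1 = S1"
proof -
  have "lenr CL 1 = {L \<in> CL. \<not> 2 \<le> length L}" unfolding lenr_def CL_def nrm_def using len1 by auto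
  then show ?thesis using singles[of CL] by simp
qed

lemma k_le4: "real (Suc j) \<le> 4 ^ j"
proof (induction j)
  case (Suc j)
  have "(1::real) \<le> 4 ^ j" by simp
  then show ?case using Suc by simp
qed simp

lemma wz_le4: "0 \<le> x \<Longrightarrow> 0 \<le> y \<Longrightarrow> 0 \<le> z \<Longrightarrow> z \<le> 4 \<Longrightarrow> wz x y z L \<le> wz x y 4 L"
  unfolding wz_def w0_def by (intro mult_left_mono power_mono) auto
lemma w0_le4: "0 \<le> x \<Longrightarrow> 0 \<le> y \<Longrightarrow> w0 x y L \<le> wz x y 4 L"
  using wz_le4[of x y 1 L] unfolding wz_def by simp
lemma w0k_le4:
  assumes "0 \<le> x" "0 \<le> y" "L \<in> CL"
  shows "w0 x y L * real (k0 L) \<le> wz x y 4 L"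
proof -
  obtain j where j: "k0 L = Suc j" using CL_k0[OF assms(3)] by auto
  show ?thesis unfolding wz_def j using k_le4[of j] w0_nonneg[OF assms(1,2), of L]
    by (simp add: mult_left_mono)
qed

lemma summ_sub:
  fixes f :: "col list \<Rightarrow> real"
  assumes "(wz x y 4) summable_on Y" "0 \<le> x" "0 \<le> y" "Z \<subseteq> Y" "Y \<subseteq> CL"
    and "\<And>L. L \<in> Z \<Longrightarrow> 0 \<le> f L \<and> f L \<le> wz x y 4 L"
  shows "f summable_on Z"
  by (rule summable_on_comparison_test[OF summable_on_subset_banach[OF assms(1,4)]]) (use assms in auto)

lemma summ_len:
  assumes x: "0 < x" "x \<le> 1/6" and y: "0 < y" "y \<le> 1/40"
  shows "(wz x y 4) summable_on (lenr CL (Suc m)) \<and> infsum (wz x y 4) (lenr CL (Suc m)) \<le> x / (1 - 4 * y) * (3 * x) ^ m"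
proof (induction m)
  case 0
  have h: "(wz x y 4 has_sum x * y / (1 - y * 4)) (lenr CL 1)" unfolding lenr1 by (rule singles_sum) (use y in auto)
  have "x * y / (1 - y * 4) \<le> x / (1 - y * 4)" using x y by (intro divide_right_mono) (auto simp: mult_left_le)
  then have "x * y / (1 - y * 4) \<le> x / (1 - 4 * y)" by (simp add: mult.commute)
  then show ?case using h by (simp add: has_sum_iff)
next
  case (Suc m)
  define A where "A = lenr CL (Suc m)"
  have nn: "0 \<le> x" "0 \<le> y" "(0::real) \<le> 4" "y * 4 < 1" "(4::real) \<noteq> 1" using x y by auto
  have sA: "(wz x y 4) summable_on A" and bA: "infsum (wz x y 4) A \<le> x / (1 - 4 * y) * (3 * x) ^ m"
    using Suc unfolding A_def by auto
  have subA: "A \<subseteq> CL" unfolding A_def lenr_def by auto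
  have sub: "lenr DL (Suc m) \<subseteq> A" "lenr UL (Suc m) \<subseteq> A" "lenr BL (Suc m) \<subseteq> A"
    unfolding A_def lenr_def using sub_CL by auto
  have sub2: "lenr CL (Suc m) \<subseteq> CL" "lenr DL (Suc m) \<subseteq> DL" "lenr UL (Suc m) \<subseteq> UL" "lenr BL (Suc m) \<subseteq> BL"
    unfolding lenr_def by auto
  have wnn: "\<And>L. 0 \<le> wz x y 4 L" using wz_nonneg nn by auto
  have s1: "w0 x y summable_on A" by (rule summ_sub[OF sA nn(1,2) order_refl subA]) (use w0_nonneg w0_le4 nn in auto)
  have sM: "(\<lambda>L. w0 x y L * real (k0 L)) summable_on A"
    by (rule summ_sub[OF sA nn(1,2) order_refl subA]) (use w0_nonneg w0k_le4 nn subA in auto)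
  have sD: "(wz x y 4) summable_on lenr DL (Suc m)" "w0 x y summable_on lenr DL (Suc m)"
    by (rule summ_sub[OF sA nn(1,2) sub(1) subA]; use w0_nonneg w0_le4 wnn nn in auto)+
  have sU: "(wz x y 4) summable_on lenr UL (Suc m)" "w0 x y summable_on lenr UL (Suc m)"
    by (rule summ_sub[OF sA nn(1,2) sub(2) subA]; use w0_nonneg w0_le4 wnn nn in auto)+
  have sB: "(wz x y 4) summable_on lenr BL (Suc m)"
    by (rule summ_sub[OF sA nn(1,2) sub(3) subA]; use w0_nonneg w0_le4 wnn nn in auto)+
  define Cz C1 M Dz D1 Uz U1 Bz where "Cz = infsum (wz x y 4) A" and "C1 = infsum (w0 x y) A"
    and "M = infsum (\<lambda>L. w0 x y L * real (k0 L)) A"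
    and "Dz = infsum (wz x y 4) (lenr DL (Suc m))" and "D1 = infsum (w0 x y) (lenr DL (Suc m))"
    and "Uz = infsum (wz x y 4) (lenr UL (Suc m))" and "U1 = infsum (w0 x y) (lenr UL (Suc m))"
    and "Bz = infsum (wz x y 4) (lenr BL (Suc m))"
  define c where "c = y * 4 / (1 - y * 4)"
  define V where "V = x * (4^2 * Cz - 4 * (M + C1) + M) / (1 - 4)^2 + x * c / (1 - 4) * (D1 - 4 * Dz)
        + x * c / (1 - 4) * (U1 - 4 * Uz) + x * (c * c) * Bz"
  have hT: "((wz x y 4 \<circ> addp) has_sum V) (TCg A (lenr DL (Suc m)) (lenr UL (Suc m)) (lenr BL (Suc m)))"
  proof -
    have h1: "(wz x y 4 has_sum Cz) A" "(w0 x y has_sum C1) A" "((\<lambda>L. w0 x y L * real (k0 L)) has_sum M) A"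
      unfolding Cz_def C1_def M_def using sA s1 sM by (auto intro: has_sum_infsum)
    have h2: "(wz x y 4 has_sum Uz) (lenr UL (Suc m))" "(w0 x y has_sum U1) (lenr UL (Suc m))"
      "(wz x y 4 has_sum Dz) (lenr DL (Suc m))" "(w0 x y has_sum D1) (lenr DL (Suc m))"
      "(wz x y 4 has_sum Bz) (lenr BL (Suc m))"
      unfolding Uz_def U1_def Dz_def D1_def Bz_def using sU sD sB by (auto intro: has_sum_infsum)
    show ?thesis unfolding V_def c_def
      by (rule sumTCg[OF nn subA sub2(2) sub2(3) sub2(4) h1 h2])
  qed
  have hL: "(wz x y 4 has_sum V) (lenr CL (Suc (Suc m)))"
    unfolding set_len[of "Suc m", simplified] A_def[symmetric]
    by (rule reindex_addp[OF _ hT]) (use subA sub sub_CL in \<open>auto simp: TCg_def lenr_def\<close>)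
  have c: "0 \<le> c" "c \<le> 1/9" using y unfolding c_def by (auto simp: field_simps)
  have nnv: "0 \<le> C1" "0 \<le> M" "0 \<le> D1" "0 \<le> U1" "0 \<le> Dz" "0 \<le> Uz" "0 \<le> Bz"
    unfolding C1_def M_def D1_def U1_def Dz_def Uz_def Bz_def
    by (intro infsum_nonneg; use w0_nonneg wnn nn in simp)+
  have le: "Dz \<le> Cz" "Uz \<le> Cz" "Bz \<le> Cz"
    unfolding Dz_def Uz_def Bz_def Cz_def
    by (intro infsum_mono2; use sA sD sU sB sub wnn in auto)+
  have "V \<le> x * (16/9) * Cz + x * c * (4/3) * Dz + x * c * (4/3) * Uz + x * (c * c) * Bz"
    unfolding V_def using nnv x c by (simp add: field_simps)
  also have "\<dots> \<le> x * (16/9) * Cz + x * (1/9) * (4/3) * Cz + x * (1/9) * (4/3) * Cz + x * ((1/9) * (1/9)) * Cz"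
    using le nnv x c by (intro add_mono mult_mono mult_left_mono) auto
  also have "\<dots> \<le> 3 * x * Cz" using x nnv le by (simp add: field_simps)
  also have "\<dots> \<le> 3 * x * (x / (1 - 4 * y) * (3 * x) ^ m)" using bA x unfolding Cz_def
    by (intro mult_left_mono) auto
  finally show ?case using hL by (simp add: has_sum_iff mult_ac)
qed


definition EE :: "real \<Rightarrow> real \<Rightarrow> real \<Rightarrow> real \<Rightarrow> real \<Rightarrow> real \<Rightarrow> real" where
  "EE x y z u1 u b = x * y / (1 - y * z) + 2 * (x * (y * z / (1 - y * z)) / (1 - z) * (u1 - z * u))
     + x * ((y * z / (1 - y * z)) * (y * z / (1 - y * z))) * b"

lemma divaux: "(c::real) \<noteq> 0 \<Longrightarrow> (y * (1 / c)) / (d / c) = y / d"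
  by (cases "d = 0") (simp_all add: field_simps)

lemma stepP: "(P::real) \<noteq> 0 \<Longrightarrow> s \<noteq> 0 \<Longrightarrow>
  (1 / P) * (s^2 * y / (D / P) + 2 * (s^2 * a / (s / P) * (u1 - (1 / P) * u)) + s^2 * (a * a) * b)
   = s^2 * y / D + 2 * s * a * (u1 - u / P) + s^2 * a^2 * b / P"
  by (cases "D = 0") (simp_all add: field_simps power2_eq_square)

lemma stepM: "(P::real) \<noteq> 0 \<Longrightarrow> s \<noteq> 0 \<Longrightarrow>
  (1 / P) * (s^2 * y / (D / P) + 2 * (s^2 * a / (- s / P) * (u1 - (1 / P) * u)) + s^2 * (a * a) * b)
   = s^2 * y / D - 2 * s * a * (u1 - u / P) + s^2 * a^2 * b / P"
  by (cases "D = 0") (simp_all add: field_simps power2_eq_square)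

lemma final_core:
  fixes P Q p m s y u1 up um bp bm :: real
  assumes nz: "P \<noteq> 0" "Q \<noteq> 0" "p \<noteq> 0" "m \<noteq> 0"
    and eqs: "P = 1 + s - y" "Q = 1 - s - y" "p = 1 + s" "m = 1 - s"
  shows "(s^2 * y / P + 2 * s * (y / P) * (u1 - up / p) + s^2 * (y / P)^2 * bp / p
        + (s^2 * y / Q - 2 * s * (y / Q) * (u1 - um / m) + s^2 * (y / Q)^2 * bm / m)) / 2
    = 2 * s^2 * y / (- (P * Q)) * u1 - s * y / (p * P) * up + s * y / (m * Q) * um
      + s^2 * y^2 / (2 * p * P^2) * bp + s^2 * y^2 / (2 * m * Q^2) * bm - s^2 * (1 - y) * y / (- (P * Q))"
proof -
  have "(s^2 * y / P + 2 * s * (y / P) * (u1 - up / p) + s^2 * (y / P)^2 * bp / p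
        + (s^2 * y / Q - 2 * s * (y / Q) * (u1 - um / m) + s^2 * (y / Q)^2 * bm / m)) / 2
      - (2 * s^2 * y / (- (P * Q)) * u1 - s * y / (p * P) * up + s * y / (m * Q) * um
      + s^2 * y^2 / (2 * p * P^2) * bp + s^2 * y^2 / (2 * m * Q^2) * bm - s^2 * (1 - y) * y / (- (P * Q)))
      = (s * y * (Q - P + 2 * s) * u1 + s^2 * y * (Q + P - 2 * (1 - y)) / 2) / (P * Q)"
    using nz by (simp add: field_simps power2_eq_square)
  also have "\<dots> = 0" using eqs by simp
  finally show ?thesis by simp
qed

lemma final_alg:
  fixes s y u1 up um bp bm :: real
  assumes s: "0 < s" "s < 1" and y: "1 + s - y \<noteq> 0" "1 - s - y \<noteq> 0" "s^2 - (1 - y)^2 \<noteq> 0"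
  defines "zp \<equiv> 1 / (1 + s)" and "zm \<equiv> 1 / (1 - s)"
  shows "(zp * EE (s^2) y zp u1 up bp + zm * EE (s^2) y zm u1 um bm) / 2
    = 2 * s^2 * y / (s^2 - (1 - y)^2) * u1
          - s * y / ((1 + s) * (1 + s - y)) * up
          + s * y / ((1 - s) * (1 - s - y)) * um
          + s^2 * y^2 / (2 * (1 + s) * (1 + s - y)^2) * bp
          + s^2 * y^2 / (2 * (1 - s) * (1 - s - y)^2) * bm
          - s^2 * (1 - y) * y / (s^2 - (1 - y)^2)"
proof -
  have ne: "1 + s \<noteq> 0" "1 - s \<noteq> 0" "s \<noteq> 0" using s by auto
  define a where "a = y / (1 + s - y)"
  define a' where "a' = y / (1 - s - y)"
  have zp0a: "1 - zp = s / (1 + s)" unfolding zp_def using ne by (simp add: field_simps)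
  have zp0b: "1 - y * zp = (1 + s - y) / (1 + s)" unfolding zp_def using ne by (simp add: field_simps)
  note zp0 = zp0a zp0b
  have "y * zp / (1 - y * zp) = a" unfolding zp0(2) unfolding zp_def a_def using ne by (intro divaux) auto
  note zp1 = zp0 this
  have zm0a: "1 - zm = - s / (1 - s)" unfolding zm_def using ne by (simp add: field_simps)
  have zm0b: "1 - y * zm = (1 - s - y) / (1 - s)" unfolding zm_def using ne by (simp add: field_simps)
  have "y * zm / (1 - y * zm) = a'" unfolding zm0b unfolding zm_def a'_def using ne by (intro divaux) auto
  note zm1 = zm0a zm0b this
  have Pp: "zp * EE (s^2) y zp u1 up bp = s^2 * y / (1 + s - y) + 2 * s * a * (u1 - up / (1 + s)) + s^2 * a^2 * bp / (1 + s)"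
    unfolding EE_def unfolding zp1(3) unfolding zp1(1,2) unfolding zp_def using ne by (intro stepP) auto
  have Pm: "zm * EE (s^2) y zm u1 um bm = s^2 * y / (1 - s - y) - 2 * s * a' * (u1 - um / (1 - s)) + s^2 * a'^2 * bm / (1 - s)"
    unfolding EE_def unfolding zm1(3) unfolding zm1(1,2) unfolding zm_def using ne by (intro stepM) auto
  have d: "s^2 - (1 - y)^2 = - ((1 + s - y) * (1 - s - y))" by (simp add: algebra_simps power2_eq_square)
  have F: "(s^2 * y / (1 + s - y) + 2 * s * (y / (1 + s - y)) * (u1 - up / (1 + s)) + s^2 * (y / (1 + s - y))^2 * bp / (1 + s)
        + (s^2 * y / (1 - s - y) - 2 * s * (y / (1 - s - y)) * (u1 - um / (1 - s)) + s^2 * (y / (1 - s - y))^2 * bm / (1 - s))) / 2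
    = 2 * s^2 * y / (- ((1 + s - y) * (1 - s - y))) * u1 - s * y / ((1 + s) * (1 + s - y)) * up + s * y / ((1 - s) * (1 - s - y)) * um
      + s^2 * y^2 / (2 * (1 + s) * (1 + s - y)^2) * bp + s^2 * y^2 / (2 * (1 - s) * (1 - s - y)^2) * bm
      - s^2 * (1 - y) * y / (- ((1 + s - y) * (1 - s - y)))"
    by (rule final_core) (use ne y in auto)
  show ?thesis
    unfolding Pp Pm d a_def a'_def using F by simp
qed


lemma summ_CL:
  assumes x: "0 < x" "x \<le> 1/6" and y: "0 < y" "y \<le> 1/40"
  shows "(wz x y 4) summable_on CL"
proof -
  have CLU: "CL = (\<Union>m\<in>UNIV. lenr CL (Suc m))"
  proof
    show "CL \<subseteq> (\<Union>m\<in>UNIV. lenr CL (Suc m))"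
    proof
      fix L assume L: "L \<in> CL"
      then have "length L = Suc (length L - 1)" unfolding CL_def nrm_def by (cases L) auto
      then have "L \<in> lenr CL (Suc (length L - 1))" using L unfolding lenr_def by simp
      then show "L \<in> (\<Union>m\<in>UNIV. lenr CL (Suc m))" by blast
    qed
    show "(\<Union>m\<in>UNIV. lenr CL (Suc m)) \<subseteq> CL" unfolding lenr_def by auto
  qed
  have g: "(\<lambda>m. infsum (wz x y 4) (lenr CL (Suc m))) summable_on UNIV"
  proof (rule summable_on_comparison_test)
    show "(\<lambda>m. x / (1 - 4 * y) * (3 * x) ^ m) summable_on UNIV"
      using has_sum_cmult_right[OF geo_nat[of "3 * x"], of "x / (1 - 4 * y)"] x
      by (auto intro: has_sum_imp_summable)
    show "infsum (wz x y 4) (lenr CL (Suc m)) \<le> x / (1 - 4 * y) * (3 * x) ^ m" for m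
      using summ_len[OF x y] by blast
    show "0 \<le> infsum (wz x y 4) (lenr CL (Suc m))" for m
      by (rule infsum_nonneg) (use wz_nonneg x y in auto)
  qed
  have "(wz x y 4) summable_on (\<Union>m\<in>UNIV. lenr CL (Suc m))"
  proof (rule summable_on_UnionI[OF _ g])
    show "(wz x y 4 has_sum infsum (wz x y 4) (lenr CL (Suc m))) (lenr CL (Suc m))" for m
      using summ_len[OF x y] by (auto intro: has_sum_infsum)
    show "0 \<le> wz x y 4 L" for L using wz_nonneg x y by auto
    show "disjoint_family_on (\<lambda>m. lenr CL (Suc m)) UNIV"
      unfolding disjoint_family_on_def lenr_def by auto
  qed
  then show ?thesis using CLU by simp
qed

lemma fl_UD: "L \<in> UL \<Longrightarrow> fl L \<in> DL" "L \<in> DL \<Longrightarrow> fl L \<in> UL"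
  unfolding UL_def DL_def using fl_props by auto

lemma wz_fl: "nrm L \<Longrightarrow> wz x y z (fl L) = wz x y z L"
  unfolding wz_def w0_def using fl_props[of L] by simp

lemma wz1: "wz x y 1 L = w0 x y L" unfolding wz_def by simp

context
  fixes x y :: real
  assumes x: "0 < x" "x \<le> 1/6" and y: "0 < y" "y \<le> 1/40"
begin

lemma hsz: "Y \<subseteq> CL \<Longrightarrow> 0 \<le> z \<Longrightarrow> z \<le> 4 \<Longrightarrow> (wz x y z has_sum infsum (wz x y z) Y) Y"
  by (intro has_sum_infsum summ_sub[OF summ_CL[OF x y]]) (use x y wz_nonneg wz_le4 in auto)

lemma hs1: "Y \<subseteq> CL \<Longrightarrow> (w0 x y has_sum infsum (w0 x y) Y) Y"
  using hsz[of Y 1] unfolding wz1[abs_def] by simp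

lemma hsM: "((\<lambda>L. w0 x y L * real (k0 L)) has_sum infsum (\<lambda>L. w0 x y L * real (k0 L)) CL) CL"
  by (intro has_sum_infsum summ_sub[OF summ_CL[OF x y]]) (use x y w0_nonneg w0k_le4 in auto)

lemma flipDU: "infsum (wz x y z) DL = infsum (wz x y z) UL"
proof -
  have bij: "bij_betw fl UL DL"
    by (rule bij_betw_byWitness[where f' = fl]) (use fl_UD fl_props(2) in \<open>auto simp: UL_def DL_def\<close>)
  have eq: "(wz x y z has_sum S) UL \<longleftrightarrow> (wz x y z has_sum S) DL" for S
  proof -
    have "((\<lambda>L. wz x y z (fl L)) has_sum S) UL \<longleftrightarrow> (wz x y z has_sum S) DL"
      by (rule has_sum_reindex_bij_betw[OF bij])
    moreover have "((\<lambda>L. wz x y z (fl L)) has_sum S) UL \<longleftrightarrow> (wz x y z has_sum S) UL"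
      by (rule has_sum_cong) (use wz_fl in \<open>auto simp: UL_def\<close>)
    ultimately show ?thesis by simp
  qed
  show ?thesis
  proof (cases "wz x y z summable_on UL")
    case True
    then have "(wz x y z has_sum infsum (wz x y z) UL) DL" using eq by (auto intro: has_sum_infsum)
    then show ?thesis by (simp add: has_sum_iff)
  next
    case False
    then have "\<not> wz x y z summable_on DL" using eq unfolding summable_on_def by blast
    then show ?thesis using False by (simp add: infsum_not_exists)
  qed
qed

end


lemma alg_B:
  fixes q a b B :: real
  assumes "q \<noteq> 0" "q^2 - a \<noteq> 0" "B = a * b / q + a * ((1 / q) * (1 / q)) * B"
  shows "B = a * b * q / (q^2 - a)"
proof -
  have "B * q^2 = a * b * q + a * B" using assms(1) by (subst assms(3)) (simp add: field_simps power2_eq_square)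
  then have "B * (q^2 - a) = a * b * q" by (simp add: algebra_simps)
  then show ?thesis using assms(2) by (simp add: field_simps)
qed

lemma alg_U:
  fixes q w D a b z U1 Uz :: real
  assumes "q \<noteq> 0" "w \<noteq> 0" "D \<noteq> 0"
    and "Uz = a * b / q + a * (1 / q) / w * (U1 - z * Uz) + a * ((b * z / q) * (1 / q)) * (a * b * q / D)"
  shows "Uz * (w * q + a * z) = a * b * w + a * U1 + a^2 * b^2 * z * w / D"
proof -
  have "Uz * (q * w) = (a * b / q + a * (1 / q) / w * (U1 - z * Uz) + a * ((b * z / q) * (1 / q)) * (a * b * q / D)) * (q * w)"
    using assms(4) by simp
  also have "\<dots> = a * b * w + a * (U1 - z * Uz) + a^2 * b^2 * z * w / D"
    using assms(1-3) by (simp add: field_simps power2_eq_square)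
  finally show ?thesis by (simp add: algebra_simps)
qed

lemma alg_kernC:
  fixes x z Cz M C1 E :: real
  assumes "x \<noteq> 0" "z \<noteq> 1" "(1 - z)^2 = x * z^2"
    and "Cz = x * (z^2 * Cz - z * (M + C1) + M) / (1 - z)^2 + E"
  shows "z * C1 - (1 - z) * M = z^2 * E"
proof -
  have nz: "(1 - z)^2 \<noteq> 0" using assms(2) by simp
  have "Cz * (1 - z)^2 = x * (z^2 * Cz - z * (M + C1) + M) + E * (1 - z)^2"
    using nz by (subst assms(4)) (simp add: field_simps)
  then have "Cz * (x * z^2) = x * (z^2 * Cz - z * (M + C1) + M) + E * (x * z^2)"
    unfolding assms(3) .
  then have "x * (z * C1 - (1 - z) * M - z^2 * E) = 0" by (simp add: algebra_simps)
  then show ?thesis using assms(1) by simp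
qed

context
  fixes x y :: real
  assumes x: "0 < x" "x < 1/100" and y: "0 < y" "y < 1/100"
begin

lemma xy6: "0 < x" "x \<le> 1/6" "0 < y" "y \<le> 1/40" using x y by auto

definition K :: "real \<Rightarrow> real" where "K z = (1 - z) * (1 - y * z) + x * z"

lemma B_closed:
  assumes "0 \<le> z" "z \<le> 4" "(1 - y * z)^2 - x \<noteq> 0"
  shows "infsum (wz x y z) BL = Cbu x y z"
proof -
  have yz: "y * z < 1" using mult_left_mono[of z 4 y] assms y by linarith
  have "infsum (wz x y z) BL = x * y / (1 - y * z) + x * ((1 / (1 - y * z)) * (1 / (1 - y * z))) * infsum (wz x y z) BL"
    by (rule eqB) (use x y assms yz hsz[OF xy6, of BL z] sub_CL in auto)
  then have "infsum (wz x y z) BL = x * y * (1 - y * z) / ((1 - y * z)^2 - x)"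
    by (rule alg_B[rotated 2]) (use yz assms in auto)
  then show ?thesis unfolding Cbu_def by simp
qed

lemma U_ker:
  assumes "0 \<le> z" "z \<le> 4" "z \<noteq> 1" "(1 - y * z)^2 - x \<noteq> 0"
  shows "infsum (wz x y z) UL * K z = x * y * (1 - z) + x * infsum (w0 x y) UL + x^2 * y^2 * z * (1 - z) / ((1 - y * z)^2 - x)"
proof -
  have yz: "y * z < 1" using mult_left_mono[of z 4 y] assms y by linarith
  have e: "infsum (wz x y z) UL = x * y / (1 - y * z) + x * (1 / (1 - y * z)) / (1 - z) * (infsum (w0 x y) UL - z * infsum (wz x y z) UL)
     + x * ((y * z / (1 - y * z)) * (1 / (1 - y * z))) * infsum (wz x y z) BL"
    by (rule eqU) (use x y assms yz hsz[OF xy6, of UL z] hsz[OF xy6, of BL z] hs1[OF xy6, of UL] sub_CL in auto)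
  have e2: "infsum (wz x y z) UL = x * y / (1 - y * z) + x * (1 / (1 - y * z)) / (1 - z) * (infsum (w0 x y) UL - z * infsum (wz x y z) UL)
     + x * ((y * z / (1 - y * z)) * (1 / (1 - y * z))) * (x * y * (1 - y * z) / ((1 - y * z)^2 - x))"
    using e B_closed[OF assms(1,2,4)] unfolding Cbu_def by simp
  have "infsum (wz x y z) UL * ((1 - z) * (1 - y * z) + x * z)
      = x * y * (1 - z) + x * infsum (w0 x y) UL + x^2 * y^2 * z * (1 - z) / ((1 - y * z)^2 - x)"
    by (rule alg_U[OF _ _ _ e2]) (use yz assms in auto)
  then show ?thesis unfolding K_def .
qed

lemma z0_props:
  shows "K (z0 x y) = 0" "0 \<le> z0 x y" "z0 x y \<le> 4" "z0 x y \<noteq> 1" "(1 - y * z0 x y)^2 - x \<noteq> 0"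
proof -
  define b where "b = 1 + y - x"
  define r where "r = sqrt (b^2 - 4 * y)"
  have b: "1/2 \<le> b" "b \<le> 2" unfolding b_def using x y by auto
  have "(1/2)^2 \<le> b^2" using b by (intro power_mono) auto
  then have b2: "1/4 \<le> b^2" by (simp add: power2_eq_square)
  have D: "0 < b^2 - 4 * y" using b2 y by linarith
  have r2: "r^2 = b^2 - 4 * y" unfolding r_def using D by simp
  have r0: "0 \<le> r" unfolding r_def using D by simp
  have rb: "r < b"
  proof (rule power2_less_imp_less)
    show "r^2 < b^2" using r2 y by simp
    show "0 \<le> b" using b by simp
  qed
  have z: "z0 x y = (b - r) / (2 * y)" unfolding z0_def b_def r_def by simp
  have prod: "(b - r) * (b + r) = 4 * y" using r2 by (simp add: algebra_simps power2_eq_square)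
  have "K (z0 x y) = y * (z0 x y)^2 - b * z0 x y + 1"
    unfolding K_def b_def by (simp add: algebra_simps power2_eq_square)
  also have "\<dots> = (y * ((b - r) / (2 * y))^2 - b * ((b - r) / (2 * y)) + 1)"
    unfolding z ..
  also have "\<dots> = ((b - r)^2 - 2 * b * (b - r) + 4 * y) / (4 * y)"
    using y by (simp add: field_simps power2_eq_square)
  also have "(b - r)^2 - 2 * b * (b - r) + 4 * y = r^2 - b^2 + 4 * y" by (simp add: algebra_simps power2_eq_square)
  also have "\<dots> = 0" using r2 by simp
  finally show K0: "K (z0 x y) = 0" by simp
  show z0nn: "0 \<le> z0 x y" unfolding z using rb y by simp
  have "b - r = 4 * y / (b + r)" using prod b r0 by (simp add: field_simps)
  also have "\<dots> \<le> 4 * y / (1/2)" using b r0 y by (intro divide_left_mono) auto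
  finally have "b - r \<le> 8 * y" by simp
  then show z04: "z0 x y \<le> 4" unfolding z using y by (simp add: field_simps)
  show "z0 x y \<noteq> 1" using K0 x unfolding K_def by auto
  have "y * z0 x y \<le> y * 4" using z04 y by (intro mult_left_mono) auto
  then have q: "(24/25) \<le> 1 - y * z0 x y" using y by linarith
  then have "(24/25) * (24/25) \<le> (1 - y * z0 x y)^2" unfolding power2_eq_square by (intro mult_mono) auto
  then show "(1 - y * z0 x y)^2 - x \<noteq> 0" using x by simp
qed

lemma xU1: "x * infsum (w0 x y) UL = - (x * y * (1 - z0 x y)) - x^2 * y^2 * z0 x y * (1 - z0 x y) / ((1 - y * z0 x y)^2 - x)"
  using U_ker[OF z0_props(2,3,4,5)] z0_props(1) by simp

lemma U1_Cu: "infsum (w0 x y) UL = Cu x y 1"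
proof -
  have "Cu x y 1 = (x * y * (z0 x y - 1) - x^2 * y^2 * z0 x y * (1 - z0 x y) / ((1 - y * z0 x y)^2 - x)) / x"
    unfolding Cu_def by simp
  also have "\<dots> = x * infsum (w0 x y) UL / x" unfolding xU1 by (simp add: algebra_simps)
  also have "\<dots> = infsum (w0 x y) UL" using x by simp
  finally show ?thesis by simp
qed

lemma Uz_Cu:
  assumes "0 \<le> z" "z \<le> 4" "z \<noteq> 1" "(1 - y * z)^2 - x \<noteq> 0" "K z \<noteq> 0"
  shows "infsum (wz x y z) UL = Cu x y z"
proof -
  have "infsum (wz x y z) UL * K z = x * y * (z0 x y - z) + x^2 * y^2 * z * (1 - z) / ((1 - y * z)^2 - x)
      - x^2 * y^2 * z0 x y * (1 - z0 x y) / ((1 - y * z0 x y)^2 - x)"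
    unfolding U_ker[OF assms(1-4)] xU1 by (simp add: algebra_simps)
  then show ?thesis unfolding Cu_def using assms(5) unfolding K_def by (simp add: field_simps)
qed

end


lemma main_CL:
  fixes x y :: real
  assumes x: "0 < x" "x < 1/100" and y: "0 < y" "y < 1/100"
  shows "(w0 x y has_sum
         (2 * x * y / (x - (1 - y)^2) * Cu x y 1
          - sqrt x * y / ((1 + sqrt x) * (1 + sqrt x - y)) * Cu x y (1 / (1 + sqrt x))
          + sqrt x * y / ((1 - sqrt x) * (1 - sqrt x - y)) * Cu x y (1 / (1 - sqrt x))
          + x * y^2 / (2 * (1 + sqrt x) * (1 + sqrt x - y)^2) * Cbu x y (1 / (1 + sqrt x))
          + x * y^2 / (2 * (1 - sqrt x) * (1 - sqrt x - y)^2) * Cbu x y (1 / (1 - sqrt x))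
          - x * (1 - y) * y / (x - (1 - y)^2))) CL"
proof -
  note xy6 = xy6[OF x y]
  define s where "s = sqrt x"
  have s0: "0 < s" unfolding s_def using x by simp
  have s2: "s^2 = x" unfolding s_def using x by simp
  have s1: "s < 1/10"
  proof (rule power_less_imp_less_base)
    show "s^2 < (1/10)^2" using s2 x by (simp add: power2_eq_square)
  qed simp
  define zp zm where "zp = 1 / (1 + s)" and "zm = 1 / (1 - s)"
  have zp: "0 \<le> zp" "zp \<le> 1" "zp \<noteq> 1" "1 - zp = s * zp" using s0 s1 unfolding zp_def by (auto simp: field_simps)
  have zm: "0 \<le> zm" "zm \<le> 2" "zm \<noteq> 1" "1 - zm = - s * zm" using s0 s1 unfolding zm_def by (auto simp: field_simps)
  have zp2: "(1 - zp)^2 = x * zp^2" unfolding zp(4) s2[symmetric] by (simp add: power_mult_distrib)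
  have zm2: "(1 - zm)^2 = x * zm^2" unfolding zm(4) s2[symmetric] by (simp add: power_mult_distrib)
  have Dne: "(1 - y * z)^2 - x \<noteq> 0" if "0 \<le> z" "z \<le> 2" for z
  proof -
    have "y * z \<le> y * 2" using that y by (intro mult_left_mono) auto
    then have q: "24/25 \<le> 1 - y * z" using y by linarith
    then have "24/25 * (24/25) \<le> (1 - y * z)^2" unfolding power2_eq_square by (intro mult_mono) auto
    then show ?thesis using x by simp
  qed
  have Kp: "K x y zp \<noteq> 0"
  proof -
    have "y * zp \<le> y * 1" using zp y by (intro mult_left_mono) auto
    then have a: "0 < 1 - y * zp" using y by linarith
    have b: "0 < 1 - zp" unfolding zp(4) using s0 zp unfolding zp_def by simp
    have "0 < (1 - zp) * (1 - y * zp)" using a b by simp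
    moreover have "0 \<le> x * zp" using x zp by simp
    ultimately have "0 < K x y zp" unfolding K_def[OF x y] by linarith
    then show ?thesis by simp
  qed
  have Km: "K x y zm \<noteq> 0"
  proof -
    have "y * zm \<le> y * 2" using zm y by (intro mult_left_mono) auto
    then have a: "s + y * zm < 1" using s1 y by linarith
    have "K x y zm = zm * s * (s - (1 - y * zm))"
      unfolding K_def[OF x y] unfolding zm(4) s2[symmetric] by (simp add: algebra_simps power2_eq_square)
    moreover have "zm * s * (s - (1 - y * zm)) < 0"
      using a s0 s1 zm unfolding zm_def by (intro mult_pos_neg) auto
    ultimately have "K x y zm < 0" by simp
    then show ?thesis by simp
  qed
  define C1 M where "C1 = infsum (w0 x y) CL" and "M = infsum (\<lambda>L. w0 x y L * real (k0 L)) CL"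
  define U1 where "U1 = infsum (w0 x y) UL"
  have U1: "U1 = Cu x y 1" unfolding U1_def by (rule U1_Cu[OF x y])
  have D1: "infsum (w0 x y) DL = U1"
    using flipDU[OF xy6, of 1] unfolding U1_def wz1[abs_def] by simp
  have kern: "z * C1 - (1 - z) * M = z^2 * EE x y z U1 (Cu x y z) (Cbu x y z)"
    if z: "0 \<le> z" "z \<le> 2" "z \<noteq> 1" "(1 - z)^2 = x * z^2" "K x y z \<noteq> 0" for z
  proof -
    have z4: "z \<le> 4" using z by simp
    have yz: "y * z < 1" using mult_left_mono[of z 2 y] z y by linarith
    have Uz: "infsum (wz x y z) UL = Cu x y z" by (rule Uz_Cu[OF x y z(1) z4 z(3) Dne[OF z(1,2)] z(5)])
    have Dz: "infsum (wz x y z) DL = Cu x y z" using flipDU[OF xy6, of z] Uz by simp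
    have Bz: "infsum (wz x y z) BL = Cbu x y z" by (rule B_closed[OF x y z(1) z4 Dne[OF z(1,2)]])
    have e: "infsum (wz x y z) CL = x * y / (1 - y * z) + x * (z^2 * infsum (wz x y z) CL - z * (M + C1) + M) / (1 - z)^2
       + x * (y * z / (1 - y * z)) / (1 - z) * (infsum (w0 x y) DL - z * infsum (wz x y z) DL)
       + x * (y * z / (1 - y * z)) / (1 - z) * (U1 - z * infsum (wz x y z) UL)
       + x * ((y * z / (1 - y * z)) * (y * z / (1 - y * z))) * infsum (wz x y z) BL"
      unfolding M_def C1_def U1_def
    proof (rule eqC)
      show "0 \<le> x" "0 \<le> y" "0 \<le> z" "y * z < 1" "z \<noteq> 1" using x y z yz by auto
      show "(wz x y z has_sum infsum (wz x y z) CL) CL" by (rule hsz[OF xy6 order_refl z(1) z4])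
      show "(w0 x y has_sum infsum (w0 x y) CL) CL" by (rule hs1[OF xy6 order_refl])
      show "((\<lambda>L. w0 x y L * real (k0 L)) has_sum infsum (\<lambda>L. w0 x y L * real (k0 L)) CL) CL" by (rule hsM[OF xy6])
      show "(wz x y z has_sum infsum (wz x y z) UL) UL" by (rule hsz[OF xy6 sub_CL(1) z(1) z4])
      show "(w0 x y has_sum infsum (w0 x y) UL) UL" by (rule hs1[OF xy6 sub_CL(1)])
      show "(wz x y z has_sum infsum (wz x y z) DL) DL" by (rule hsz[OF xy6 sub_CL(2) z(1) z4])
      show "(w0 x y has_sum infsum (w0 x y) DL) DL" by (rule hs1[OF xy6 sub_CL(2)])
      show "(wz x y z has_sum infsum (wz x y z) BL) BL" by (rule hsz[OF xy6 sub_CL(3) z(1) z4])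
    qed
    have "infsum (wz x y z) CL = x * (z^2 * infsum (wz x y z) CL - z * (M + C1) + M) / (1 - z)^2
        + EE x y z U1 (Cu x y z) (Cbu x y z)"
      using e unfolding D1 Dz Uz Bz EE_def by (simp add: algebra_simps)
    then show ?thesis by (rule alg_kernC[rotated 3]) (use x z in auto)
  qed
  have kp: "C1 - s * M = zp * EE x y zp U1 (Cu x y zp) (Cbu x y zp)"
  proof -
    have "zp * C1 - (1 - zp) * M = zp^2 * EE x y zp U1 (Cu x y zp) (Cbu x y zp)"
      by (rule kern) (use zp zp2 Kp in auto)
    then have "zp * (C1 - s * M - zp * EE x y zp U1 (Cu x y zp) (Cbu x y zp)) = 0"
      unfolding zp(4) by (simp add: algebra_simps power2_eq_square)
    moreover have "zp \<noteq> 0" unfolding zp_def using s0 by simp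
    ultimately show ?thesis by simp
  qed
  have km: "C1 + s * M = zm * EE x y zm U1 (Cu x y zm) (Cbu x y zm)"
  proof -
    have "zm * C1 - (1 - zm) * M = zm^2 * EE x y zm U1 (Cu x y zm) (Cbu x y zm)"
      by (rule kern) (use zm zm2 Km in auto)
    then have "zm * (C1 + s * M - zm * EE x y zm U1 (Cu x y zm) (Cbu x y zm)) = 0"
      unfolding zm(4) by (simp add: algebra_simps power2_eq_square)
    moreover have "zm \<noteq> 0" unfolding zm_def using s0 s1 by simp
    ultimately show ?thesis by simp
  qed
  have C1: "C1 = (zp * EE x y zp U1 (Cu x y zp) (Cbu x y zp) + zm * EE x y zm U1 (Cu x y zm) (Cbu x y zm)) / 2"
    using kp km by simp
  have fa: "(zp * EE (s^2) y zp U1 (Cu x y zp) (Cbu x y zp) + zm * EE (s^2) y zm U1 (Cu x y zm) (Cbu x y zm)) / 2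
    = 2 * s^2 * y / (s^2 - (1 - y)^2) * U1
          - s * y / ((1 + s) * (1 + s - y)) * Cu x y zp
          + s * y / ((1 - s) * (1 - s - y)) * Cu x y zm
          + s^2 * y^2 / (2 * (1 + s) * (1 + s - y)^2) * Cbu x y zp
          + s^2 * y^2 / (2 * (1 - s) * (1 - s - y)^2) * Cbu x y zm
          - s^2 * (1 - y) * y / (s^2 - (1 - y)^2)"
    unfolding zp_def zm_def
  proof (rule final_alg)
    show "0 < s" "s < 1" using s0 s1 by auto
    show "1 + s - y \<noteq> 0" "1 - s - y \<noteq> 0" using s0 s1 y by auto
    have "s^2 < (1 - y)^2" using s2 x y by (intro power_strict_mono) (use s0 s1 in auto)
    then show "s^2 - (1 - y)^2 \<noteq> 0" by simp
  qed
  have "C1 = 2 * s^2 * y / (s^2 - (1 - y)^2) * U1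
          - s * y / ((1 + s) * (1 + s - y)) * Cu x y zp
          + s * y / ((1 - s) * (1 - s - y)) * Cu x y zm
          + s^2 * y^2 / (2 * (1 + s) * (1 + s - y)^2) * Cbu x y zp
          + s^2 * y^2 / (2 * (1 - s) * (1 - s - y)^2) * Cbu x y zm
          - s^2 * (1 - y) * y / (s^2 - (1 - y)^2)"
    using C1 fa unfolding s2 by simp
  then have "C1 = 2 * x * y / (x - (1 - y)^2) * Cu x y 1
          - sqrt x * y / ((1 + sqrt x) * (1 + sqrt x - y)) * Cu x y (1 / (1 + sqrt x))
          + sqrt x * y / ((1 - sqrt x) * (1 - sqrt x - y)) * Cu x y (1 / (1 - sqrt x))
          + x * y^2 / (2 * (1 + sqrt x) * (1 + sqrt x - y)^2) * Cbu x y (1 / (1 + sqrt x))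
          + x * y^2 / (2 * (1 - sqrt x) * (1 - sqrt x - y)^2) * Cbu x y (1 / (1 - sqrt x))
          - x * (1 - y) * y / (x - (1 - y)^2)"
    unfolding s2 U1 unfolding s_def zp_def zm_def .
  moreover have "(w0 x y has_sum C1) CL" unfolding C1_def by (rule hs1[OF xy6]) simp
  ultimately show ?thesis by simp
qed


definition cells :: "col list \<Rightarrow> (int \<times> int) set" where
  "cells L = {p. 0 \<le> fst p \<and> fst p < int (length L) \<and> fst (L ! nat (fst p)) \<le> snd p \<and> snd p \<le> snd (L ! nat (fst p))}"

definition Phi :: "col list \<Rightarrow> (int \<times> int) set" where
  "Phi L = cells (sh (- botmin L) L)"

lemma mem_cells: "(i, j) \<in> cells L \<longleftrightarrow> 0 \<le> i \<and> i < int (length L) \<and> fst (L ! nat i) \<le> j \<and> j \<le> snd (L ! nat i)"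
  unfolding cells_def by simp

lemma mem_cells_nat: "(int k, j) \<in> cells L \<longleftrightarrow> k < length L \<and> fst (L ! k) \<le> j \<and> j \<le> snd (L ! k)"
  unfolding cells_def by simp

lemma finite_cells: "finite (cells L)"
proof (rule finite_subset)
  show "cells L \<subseteq> {0..<int (length L)} \<times> {botmin L..topmax L}"
  proof
    fix p assume p: "p \<in> cells L"
    obtain i j where ij: "p = (i, j)" by (cases p)
    then have "0 \<le> i" "i < int (length L)" "fst (L ! nat i) \<le> j" "j \<le> snd (L ! nat i)" using p mem_cells by auto
    moreover have "L ! nat i \<in> set L" using \<open>0 \<le> i\<close> \<open>i < int (length L)\<close> by simp
    ultimately show "p \<in> {0..<int (length L)} \<times> {botmin L..topmax L}"
      using ij botmin_le[of "L ! nat i" L] topmax_ge[of "L ! nat i" L] by auto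
  qed
qed simp

lemma fst_cells: "okc L \<Longrightarrow> fst ` cells L = {0..<int (length L)}"
proof
  assume "okc L"
  show "{0..<int (length L)} \<subseteq> fst ` cells L"
  proof
    fix i assume i: "i \<in> {0..<int (length L)}"
    then have "(i, fst (L ! nat i)) \<in> cells L" using \<open>okc L\<close> unfolding mem_cells okc_def by auto
    then show "i \<in> fst ` cells L" by force
  qed
qed (auto simp: cells_def)

lemma rows_valid: "valid L \<Longrightarrow> {j. \<exists>i<length L. fst (L!i) \<le> j \<and> j \<le> snd (L!i)} = {botmin L..topmax L}"
proof (induction L rule: botmin.induct)
  case 1 then show ?case by (simp add: valid_def)
next
  case (2 c) then show ?case by auto
next
  case (3 c d L)
  define L' where "L' = d # L"
  have L': "L' \<noteq> []" unfolding L'_def by simp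
  have v: "valid L'" "fst (hd L') \<le> snd c" "fst c \<le> snd (hd L')" "fst c \<le> snd c"
    using valid_Cons[OF L', of c] 3(2) unfolding L'_def by auto
  have IH: "{j. \<exists>i<length L'. fst (L'!i) \<le> j \<and> j \<le> snd (L'!i)} = {botmin L'..topmax L'}"
    using 3(1) v(1) unfolding L'_def by simp
  have split: "{j. \<exists>i<length (c # L'). fst ((c # L')!i) \<le> j \<and> j \<le> snd ((c # L')!i)}
      = {fst c..snd c} \<union> {j. \<exists>i<length L'. fst (L'!i) \<le> j \<and> j \<le> snd (L'!i)}"
  proof (intro set_eqI iffI)
    fix j assume "j \<in> {j. \<exists>i<length (c # L'). fst ((c # L')!i) \<le> j \<and> j \<le> snd ((c # L')!i)}"
    then obtain i where i: "i < length (c # L')" "fst ((c # L')!i) \<le> j" "j \<le> snd ((c # L')!i)" by auto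
    show "j \<in> {fst c..snd c} \<union> {j. \<exists>i<length L'. fst (L'!i) \<le> j \<and> j \<le> snd (L'!i)}"
    proof (cases i)
      case 0 then show ?thesis using i by auto
    next
      case (Suc i') then show ?thesis using i by auto
    qed
  next
    fix j assume j: "j \<in> {fst c..snd c} \<union> {j. \<exists>i<length L'. fst (L'!i) \<le> j \<and> j \<le> snd (L'!i)}"
    show "j \<in> {j. \<exists>i<length (c # L'). fst ((c # L')!i) \<le> j \<and> j \<le> snd ((c # L')!i)}"
    proof (cases "j \<in> {fst c..snd c}")
      case True then show ?thesis by (auto intro!: exI[of _ 0])
    next
      case False
      then obtain i where "i < length L'" "fst (L'!i) \<le> j" "j \<le> snd (L'!i)" using j by auto
      then show ?thesis by (auto intro!: exI[of _ "Suc i"])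
    qed
  qed
  have h: "botmin L' \<le> fst (hd L')" "snd (hd L') \<le> topmax L'" using botmin_le_hd[OF L'] topmax_ge_hd[OF L'] by auto
  have "{fst c..snd c} \<union> {botmin L'..topmax L'} = {min (fst c) (botmin L')..max (snd c) (topmax L')}"
    using v h by (auto simp: min_def max_def)
  then show ?case using split IH unfolding L'_def[symmetric] by (simp add: botmin_Cons[OF L'] topmax_Cons[OF L'])
qed

lemma snd_cells: "valid L \<Longrightarrow> snd ` cells L = {botmin L..topmax L}"
proof -
  assume v: "valid L"
  have "snd ` cells L = {j. \<exists>i<length L. fst (L!i) \<le> j \<and> j \<le> snd (L!i)}"
  proof
    show "snd ` cells L \<subseteq> {j. \<exists>i<length L. fst (L!i) \<le> j \<and> j \<le> snd (L!i)}"
      by (auto simp: cells_def intro!: exI[of _ "nat _"])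
    show "{j. \<exists>i<length L. fst (L!i) \<le> j \<and> j \<le> snd (L!i)} \<subseteq> snd ` cells L"
    proof
      fix j assume "j \<in> {j. \<exists>i<length L. fst (L!i) \<le> j \<and> j \<le> snd (L!i)}"
      then obtain i where "i < length L" "fst (L!i) \<le> j" "j \<le> snd (L!i)" by auto
      then have "(int i, j) \<in> cells L" by (simp add: mem_cells_nat)
      then show "j \<in> snd ` cells L" by force
    qed
  qed
  then show ?thesis using rows_valid[OF v] by simp
qed


definition adjS :: "(int \<times> int) set \<Rightarrow> int \<times> int \<Rightarrow> int \<times> int \<Rightarrow> bool" where
  "adjS S a b \<longleftrightarrow> a \<in> S \<and> b \<in> S \<and> edge_adj a b"

lemma symp_adjS: "symp (adjS S)"
  unfolding symp_def adjS_def edge_adj_def by (auto simp: abs_minus_commute)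

lemma R_sym: "(adjS S)\<^sup>*\<^sup>* a b \<Longrightarrow> (adjS S)\<^sup>*\<^sup>* b a"
  using symp_rtranclp[OF symp_adjS] unfolding symp_def by blast

lemma vert:
  assumes "okc L" "(i, j) \<in> cells L" "(i, j') \<in> cells L" "j \<le> j'"
  shows "(adjS (cells L))\<^sup>*\<^sup>* (i, j) (i, j')"
  using assms(3,4)
proof (induction "nat (j' - j)" arbitrary: j')
  case 0 then have "j' = j" by simp
  then show ?case by simp
next
  case (Suc n)
  have "j < j'" using Suc.hyps(2) by linarith
  then have m: "(i, j' - 1) \<in> cells L" using Suc.prems assms(2) unfolding mem_cells by auto
  have "(adjS (cells L))\<^sup>*\<^sup>* (i, j) (i, j' - 1)"
    using Suc.hyps(1)[of "j' - 1"] Suc.hyps(2) Suc.prems m by simp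
  moreover have "adjS (cells L) (i, j' - 1) (i, j')"
    using m Suc.prems unfolding adjS_def edge_adj_def by simp
  ultimately show ?case by (rule rtranclp.rtrancl_into_rtrancl)
qed

lemma vert':
  assumes "okc L" "(i, j) \<in> cells L" "(i, j') \<in> cells L"
  shows "(adjS (cells L))\<^sup>*\<^sup>* (i, j) (i, j')"
proof (cases "j \<le> j'")
  case True then show ?thesis using vert assms by blast
next
  case False then show ?thesis using vert[OF assms(1,3,2)] R_sym by auto
qed

lemma conn_cells:
  assumes "valid L"
  shows "\<forall>p\<in>cells L. \<forall>q\<in>cells L. (adjS (cells L))\<^sup>*\<^sup>* p q"
proof -
  have ok: "okc L" "ovl L" using assms unfolding valid_def by auto
  have ne: "L \<noteq> []" using assms unfolding valid_def by auto
  define base where "base = (0::int, fst (L ! 0))"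
  have bS: "base \<in> cells L" unfolding base_def mem_cells using ok ne unfolding okc_def by auto
  have claim: "\<forall>j. (int k, j) \<in> cells L \<longrightarrow> (adjS (cells L))\<^sup>*\<^sup>* base (int k, j)" if "k < length L" for k
    using that
  proof (induction k)
    case 0 then show ?case using vert'[OF ok(1)] bS unfolding base_def by auto
  next
    case (Suc k)
    define js where "js = max (fst (L ! k)) (fst (L ! Suc k))"
    have jk: "(int k, js) \<in> cells L" "(int (Suc k), js) \<in> cells L"
      using ok Suc.prems unfolding mem_cells_nat okc_def ovl_def js_def by (auto simp: max_def)
    have "(adjS (cells L))\<^sup>*\<^sup>* base (int k, js)" using Suc jk by auto
    moreover have "adjS (cells L) (int k, js) (int (Suc k), js)"
      using jk unfolding adjS_def edge_adj_def by simp
    ultimately have "(adjS (cells L))\<^sup>*\<^sup>* base (int (Suc k), js)" by (rule rtranclp.rtrancl_into_rtrancl)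
    then show ?case using vert'[OF ok(1) jk(2)] by (meson rtranclp_trans)
  qed
  have all: "(adjS (cells L))\<^sup>*\<^sup>* base p" if "p \<in> cells L" for p
  proof -
    obtain i j where p: "p = (i, j)" by (cases p)
    have "0 \<le> i" "i < int (length L)" using that p mem_cells by auto
    then obtain k where "i = int k" "k < length L" by (metis nat_0_le nat_less_iff)
    then show ?thesis using claim that p by auto
  qed
  show ?thesis using all R_sym by (meson rtranclp_trans)
qed

lemma rowconv_cells:
  assumes "valid L" "(i1, j) \<in> cells L" "(i2, j) \<in> cells L" "i1 \<le> i" "i \<le> i2"
  shows "(i, j) \<in> cells L"
proof -
  obtain a c where ac: "i1 = int a" "i2 = int c" using assms(2,3) unfolding mem_cells by (metis nonneg_int_cases)
  obtain k where k: "i = int k" using assms(2,4) unfolding mem_cells by (metis nonneg_int_cases order_trans)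
  have a: "a < length L" "fst (L!a) \<le> j" "j \<le> snd (L!a)" using assms(2) ac mem_cells_nat by auto
  have c: "c < length L" "fst (L!c) \<le> j" "j \<le> snd (L!c)" using assms(3) ac mem_cells_nat by auto
  have akc: "a \<le> k" "k \<le> c" using assms(4,5) ac k by auto
  show ?thesis
  proof (cases "k = a \<or> k = c")
    case True then show ?thesis using assms(2,3) ac k by auto
  next
    case False
    then have lt: "a < k" "k < c" using akc by auto
    have nd: "nodip L" "nopeak L" using assms(1) unfolding valid_def by auto
    have "\<not> (snd (L!k) < snd (L!a) \<and> snd (L!k) < snd (L!c))" using nd(1) lt c(1) unfolding nodip_def by blast
    moreover have "\<not> (fst (L!a) < fst (L!k) \<and> fst (L!c) < fst (L!k))" using nd(2) lt c(1) unfolding nopeak_def by blast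
    ultimately have "fst (L!k) \<le> j" "j \<le> snd (L!k)" using a c by auto
    then show ?thesis using k lt c(1) mem_cells_nat by auto
  qed
qed

lemma cells_sh: "cells (sh d L) = (\<lambda>(i, j). (i, j + d)) ` cells L"
proof (intro set_eqI iffI)
  fix p assume "p \<in> cells (sh d L)"
  then show "p \<in> (\<lambda>(i, j). (i, j + d)) ` cells L"
    unfolding cells_def by (auto intro!: image_eqI[of _ _ "(fst p, snd p - d)"])
next
  fix p assume "p \<in> (\<lambda>(i, j). (i, j + d)) ` cells L"
  then show "p \<in> cells (sh d L)" unfolding cells_def by auto
qed

lemma Phi_CP:
  assumes "L \<in> CL"
  shows "Phi L \<in> CP"
proof -
  define L' where "L' = sh (- botmin L) L"
  have v: "valid L'" "L' \<noteq> []" using assms unfolding L'_def valid_sh CL_def nrm_def by auto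
  have bm: "botmin L' = 0" unfolding L'_def using v by (simp add: L'_def)
  have P: "Phi L = cells L'" unfolding Phi_def L'_def ..
  have poly: "polyomino (cells L')"
    unfolding polyomino_def
  proof (intro conjI)
    show "finite (cells L')" by (rule finite_cells)
    have "(0, fst (L' ! 0)) \<in> cells L'" using v unfolding mem_cells valid_def okc_def by auto
    then show "cells L' \<noteq> {}" by auto
    show "\<forall>p\<in>cells L'. \<forall>q\<in>cells L'. (\<lambda>a b. a \<in> cells L' \<and> b \<in> cells L' \<and> edge_adj a b)\<^sup>*\<^sup>* p q"
      using conn_cells[OF v(1)] unfolding adjS_def .
  qed
  have conv: "convex_polyomino (cells L')"
    unfolding convex_polyomino_def
  proof (intro conjI poly allI impI)
    fix i j1 j2 j assume "(i, j1) \<in> cells L'" "(i, j2) \<in> cells L'" "j1 \<le> j" "j \<le> j2"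
    then show "(i, j) \<in> cells L'" unfolding mem_cells by auto
  next
    fix j i1 i2 i assume "(i1, j) \<in> cells L'" "(i2, j) \<in> cells L'" "i1 \<le> i" "i \<le> i2"
    then show "(i, j) \<in> cells L'" using rowconv_cells[OF v(1)] by blast
  qed
  have nrmz: "normalized (cells L')"
    unfolding normalized_def
  proof (intro conjI ballI)
    fix p assume p: "p \<in> cells L'"
    then show "0 \<le> fst p" unfolding cells_def by auto
    have "L' ! nat (fst p) \<in> set L'" using p unfolding cells_def by auto
    then have "botmin L' \<le> fst (L' ! nat (fst p))" by (rule botmin_le)
    then show "0 \<le> snd p" using p bm unfolding cells_def by auto
  next
    have "(0, fst (L' ! 0)) \<in> cells L'" using v unfolding mem_cells valid_def okc_def by auto
    then show "\<exists>p\<in>cells L'. fst p = 0" by force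
    obtain c where c: "c \<in> set L'" "botmin L' = fst c" using botmin_in[OF v(2)] by auto
    then obtain k where k: "k < length L'" "L' ! k = c" by (meson in_set_conv_nth)
    have "fst c \<le> snd c" using valid_okc[OF v(1) c(1)] .
    then have "(int k, fst c) \<in> cells L'" using k by (simp add: mem_cells_nat)
    then show "\<exists>p\<in>cells L'. snd p = 0" using c bm by force
  qed
  show ?thesis unfolding P CP_def using conv nrmz by simp
qed

lemma Phi_size:
  assumes "L \<in> CL"
  shows "ncols (Phi L) = length L" "nrows (Phi L) = hgt L"
proof -
  define L' where "L' = sh (- botmin L) L"
  have v: "valid L'" "L' \<noteq> []" "L \<noteq> []" using assms unfolding L'_def valid_sh CL_def nrm_def by auto
  have P: "Phi L = cells L'" unfolding Phi_def L'_def ..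
  have okc: "okc L'" using v unfolding valid_def by auto
  show "ncols (Phi L) = length L" unfolding ncols_def P unfolding fst_cells[OF okc] unfolding L'_def by simp
  show "nrows (Phi L) = hgt L" unfolding nrows_def P snd_cells[OF v(1)]
    using hgt_sh[OF v(3), of "- botmin L"] unfolding hgt_def L'_def by simp
qed

lemma col_cells: "k < length L \<Longrightarrow> {j. (int k, j) \<in> cells L} = {fst (L!k)..snd (L!k)}"
  by (auto simp: mem_cells_nat)

lemma Phi_inj: "inj_on Phi CL"
proof (rule inj_onI)
  fix L1 L2 assume L: "L1 \<in> CL" "L2 \<in> CL" "Phi L1 = Phi L2"
  have len: "length L1 = length L2" using Phi_size(1)[OF L(1)] Phi_size(1)[OF L(2)] L(3) by simp
  have ne: "L1 \<noteq> []" "L2 \<noteq> []" "fst (hd L1) = 0" "fst (hd L2) = 0" using L unfolding CL_def nrm_def by auto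
  have ok: "okc L1" "okc L2" using L unfolding CL_def valid_def by auto
  define d1 d2 where "d1 = - botmin L1" and "d2 = - botmin L2"
  have col: "{fst (L1!k) + d1..snd (L1!k) + d1} = {fst (L2!k) + d2..snd (L2!k) + d2}" if "k < length L1" for k
  proof -
    have "{j. (int k, j) \<in> cells (sh d1 L1)} = {j. (int k, j) \<in> cells (sh d2 L2)}"
      using L(3) unfolding Phi_def d1_def d2_def by simp
    then show ?thesis using col_cells[of k "sh d1 L1"] col_cells[of k "sh d2 L2"] that len by simp
  qed
  have eqk: "fst (L1!k) + d1 = fst (L2!k) + d2 \<and> snd (L1!k) + d1 = snd (L2!k) + d2" if "k < length L1" for k
  proof -
    have "fst (L1!k) \<le> snd (L1!k)" using ok(1) that unfolding okc_def by auto
    then show ?thesis using col[OF that] by (simp add: Icc_eq_Icc)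
  qed
  have "fst (L1!0) = 0" "fst (L2!0) = 0" using ne by (auto simp: hd_conv_nth)
  then have "d1 = d2" using eqk[of 0] ne by simp
  then have "L1 ! k = L2 ! k" if "k < length L1" for k using eqk[OF that] by (simp add: prod_eq_iff)
  then show "L1 = L2" using len by (simp add: nth_equalityI)
qed


lemma ivt_top_left:
  fixes L :: "col list"
  assumes "ovl L" "k < length L" "a < k" "j \<le> snd (L!a)" "snd (L!k) < j"
  shows "\<exists>a'. a \<le> a' \<and> a' < k \<and> fst (L!a') \<le> j \<and> j \<le> snd (L!a')"
  using assms(2-5)
proof (induction k)
  case 0 then show ?case by simp
next
  case (Suc k)
  show ?case
  proof (cases "j \<le> snd (L!k)")
    case True
    have "fst (L!k) \<le> snd (L!Suc k)" using assms(1) Suc.prems unfolding ovl_def by auto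
    then show ?thesis using True Suc.prems by (intro exI[of _ k]) auto
  next
    case False
    then have "a < k" using Suc.prems by (metis less_Suc_eq)
    then show ?thesis using Suc.IH Suc.prems False by (metis Suc_lessD less_SucI not_le)
  qed
qed

lemma ivt_top_right:
  fixes L :: "col list"
  assumes "ovl L" "c < length L" "k < c" "j \<le> snd (L!c)" "snd (L!k) < j"
  shows "\<exists>c'. k < c' \<and> c' \<le> c \<and> fst (L!c') \<le> j \<and> j \<le> snd (L!c')"
  using assms(2-5)
proof (induction c)
  case 0 then show ?case by simp
next
  case (Suc c)
  show ?case
  proof (cases "snd (L!c) < j")
    case True
    have "fst (L!Suc c) \<le> snd (L!c)" using assms(1) Suc.prems unfolding ovl_def by auto
    then show ?thesis using True Suc.prems by (intro exI[of _ "Suc c"]) auto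
  next
    case False
    then have "k < c" using Suc.prems by (metis less_Suc_eq not_le)
    then show ?thesis using Suc.IH Suc.prems False by (metis Suc_lessD le_SucI not_le)
  qed
qed

lemma ivt_bot_left:
  fixes L :: "col list"
  assumes "ovl L" "k < length L" "a < k" "fst (L!a) \<le> j" "j < fst (L!k)"
  shows "\<exists>a'. a \<le> a' \<and> a' < k \<and> fst (L!a') \<le> j \<and> j \<le> snd (L!a')"
  using assms(2-5)
proof (induction k)
  case 0 then show ?case by simp
next
  case (Suc k)
  show ?case
  proof (cases "fst (L!k) \<le> j")
    case True
    have "fst (L!Suc k) \<le> snd (L!k)" using assms(1) Suc.prems unfolding ovl_def by auto
    then show ?thesis using True Suc.prems by (intro exI[of _ k]) auto
  next
    case False
    then have "a < k" using Suc.prems by (metis less_Suc_eq)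
    then show ?thesis using Suc.IH Suc.prems False by (metis Suc_lessD less_SucI not_le)
  qed
qed

lemma ivt_bot_right:
  fixes L :: "col list"
  assumes "ovl L" "c < length L" "k < c" "fst (L!c) \<le> j" "j < fst (L!k)"
  shows "\<exists>c'. k < c' \<and> c' \<le> c \<and> fst (L!c') \<le> j \<and> j \<le> snd (L!c')"
  using assms(2-5)
proof (induction c)
  case 0 then show ?case by simp
next
  case (Suc c)
  show ?case
  proof (cases "j < fst (L!c)")
    case True
    have "fst (L!c) \<le> snd (L!Suc c)" using assms(1) Suc.prems unfolding ovl_def by auto
    then show ?thesis using True Suc.prems by (intro exI[of _ "Suc c"]) auto
  next
    case False
    then have "k < c" using Suc.prems by (metis less_Suc_eq not_le)
    then show ?thesis using Suc.IH Suc.prems False by (metis Suc_lessD le_SucI not_le)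
  qed
qed

lemma valid_from_rowconv:
  fixes L :: "col list"
  assumes "L \<noteq> []" "okc L" "ovl L"
    and rc: "\<And>j i1 i2 i. (i1, j) \<in> cells L \<Longrightarrow> (i2, j) \<in> cells L \<Longrightarrow> i1 \<le> i \<Longrightarrow> i \<le> i2 \<Longrightarrow> (i, j) \<in> cells L"
  shows "valid L"
proof -
  have rc': "fst (L!i) \<le> j \<and> j \<le> snd (L!i)"
    if "a \<le> i" "i \<le> c" "c < length L" "fst (L!a) \<le> j" "j \<le> snd (L!a)" "fst (L!c) \<le> j" "j \<le> snd (L!c)" for a i c j
  proof -
    have "(int a, j) \<in> cells L" "(int c, j) \<in> cells L" using that by (auto simp: mem_cells_nat)
    then have "(int i, j) \<in> cells L" using rc[of "int a" j "int c" "int i"] that by auto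
    then show ?thesis by (simp add: mem_cells_nat)
  qed
  have nd: "nodip L" unfolding nodip_def
  proof (intro allI impI notI)
    fix a i c assume h: "a < i" "i < c" "c < length L" "snd (L!i) < snd (L!a) \<and> snd (L!i) < snd (L!c)"
    define j where "j = snd (L!i) + 1"
    obtain a' where a': "a \<le> a'" "a' < i" "fst (L!a') \<le> j" "j \<le> snd (L!a')"
      using ivt_top_left[OF assms(3), of i a j] h unfolding j_def by auto
    obtain c' where c': "i < c'" "c' \<le> c" "fst (L!c') \<le> j" "j \<le> snd (L!c')"
      using ivt_top_right[OF assms(3), of c i j] h unfolding j_def by auto
    have "j \<le> snd (L!i)" using rc'[of a' i c' j] a' c' h by auto
    then show False unfolding j_def by simp
  qed
  have np: "nopeak L" unfolding nopeak_def
  proof (intro allI impI notI)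
    fix a i c assume h: "a < i" "i < c" "c < length L" "fst (L!a) < fst (L!i) \<and> fst (L!c) < fst (L!i)"
    define j where "j = fst (L!i) - 1"
    obtain a' where a': "a \<le> a'" "a' < i" "fst (L!a') \<le> j" "j \<le> snd (L!a')"
      using ivt_bot_left[OF assms(3), of i a j] h unfolding j_def by auto
    obtain c' where c': "i < c'" "c' \<le> c" "fst (L!c') \<le> j" "j \<le> snd (L!c')"
      using ivt_bot_right[OF assms(3), of c i j] h unfolding j_def by auto
    have "fst (L!i) \<le> j" using rc'[of a' i c' j] a' c' h by auto
    then show False unfolding j_def by simp
  qed
  show ?thesis unfolding valid_def using assms nd np by auto
qed

lemma crossing:
  assumes "(adjS S)\<^sup>*\<^sup>* p q" "fst p < i"
  shows "fst q < i \<or> (\<exists>j. (i - 1, j) \<in> S \<and> (i, j) \<in> S)"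
  using assms(1)
proof (induction rule: rtranclp_induct)
  case base then show ?case using assms(2) by simp
next
  case (step q r)
  show ?case
  proof (cases "\<exists>j. (i - 1, j) \<in> S \<and> (i, j) \<in> S")
    case True then show ?thesis by simp
  next
    case False
    then have q: "fst q < i" using step by auto
    have e: "\<bar>fst q - fst r\<bar> + \<bar>snd q - snd r\<bar> = 1" "q \<in> S" "r \<in> S" using step(2) unfolding adjS_def edge_adj_def by auto
    show ?thesis
    proof (cases "fst r < i")
      case True then show ?thesis by simp
    next
      case False
      then have "fst q = i - 1" "fst r = i" "snd q = snd r" using q e by auto
      then have "(i - 1, snd q) \<in> S" "(i, snd q) \<in> S" using e by (metis prod.collapse)+
      then show ?thesis by blast
    qed
  qed
qed


lemma CP_surj:
  assumes "P \<in> CP"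
  shows "\<exists>L\<in>CL. Phi L = P"
proof -
  have cp: "convex_polyomino P" "normalized P" using assms unfolding CP_def by auto
  have poly: "polyomino P" using cp(1) unfolding convex_polyomino_def by blast
  then have fin: "finite P" and ne: "P \<noteq> {}" unfolding polyomino_def by blast+
  have conn: "\<forall>p\<in>P. \<forall>q\<in>P. (adjS P)\<^sup>*\<^sup>* p q"
    using poly unfolding polyomino_def adjS_def[abs_def] by blast
  have colc: "\<And>i j1 j2 j. (i, j1) \<in> P \<Longrightarrow> (i, j2) \<in> P \<Longrightarrow> j1 \<le> j \<Longrightarrow> j \<le> j2 \<Longrightarrow> (i, j) \<in> P"
    using cp(1) unfolding convex_polyomino_def by blast
  have rowc: "\<And>j i1 i2 i. (i1, j) \<in> P \<Longrightarrow> (i2, j) \<in> P \<Longrightarrow> i1 \<le> i \<Longrightarrow> i \<le> i2 \<Longrightarrow> (i, j) \<in> P"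
    using cp(1) unfolding convex_polyomino_def by blast
  have nn: "\<And>p. p \<in> P \<Longrightarrow> 0 \<le> fst p \<and> 0 \<le> snd p" using cp(2) unfolding normalized_def by auto
  obtain p0 where p0: "p0 \<in> P" "fst p0 = 0" using cp(2) unfolding normalized_def by auto
  obtain py where py: "py \<in> P" "snd py = 0" using cp(2) unfolding normalized_def by auto
  define N where "N = Max (fst ` P)"
  have finf: "finite (fst ` P)" using fin by simp
  have "N \<in> fst ` P" unfolding N_def using Max_in[OF finf] ne by blast
  then obtain pN where pN: "pN \<in> P" "fst pN = N" by blast
  have leN: "fst p \<le> N" if "p \<in> P" for p unfolding N_def using finf that by simp
  have N0: "0 \<le> N" using leN[OF p0(1)] p0 by simp
  have cross: "\<exists>j. (i - 1, j) \<in> P \<and> (i, j) \<in> P" if "1 \<le> i" "i \<le> N" for i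
    using crossing[OF conn[rule_format, OF p0(1) pN(1)], of i] p0 pN that by auto
  define col where "col k = {j. (int k, j) \<in> P}" for k
  define m where "m = Suc (nat N)"
  have colne: "col k \<noteq> {}" if "k < m" for k
  proof (cases k)
    case 0
    have "(int 0, snd p0) \<in> P" using p0 by (metis prod.collapse of_nat_0)
    then show ?thesis using 0 unfolding col_def by blast
  next
    case (Suc k')
    have "1 \<le> int k" "int k \<le> N" using Suc that unfolding m_def by auto
    then obtain j where "(int k, j) \<in> P" using cross[of "int k"] by blast
    then show ?thesis unfolding col_def by auto
  qed
  have colfin: "finite (col k)" for k
  proof (rule finite_subset[of _ "snd ` P"])
    show "col k \<subseteq> snd ` P" unfolding col_def by force
  qed (use fin in simp)
  have colmem: "(int k, j) \<in> P \<longleftrightarrow> Min (col k) \<le> j \<and> j \<le> Max (col k)" if "k < m" for k j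
  proof
    assume "(int k, j) \<in> P"
    then show "Min (col k) \<le> j \<and> j \<le> Max (col k)" using colfin[of k] unfolding col_def by auto
  next
    assume h: "Min (col k) \<le> j \<and> j \<le> Max (col k)"
    have "Min (col k) \<in> col k" "Max (col k) \<in> col k" using colfin colne[OF that] by auto
    then show "(int k, j) \<in> P" using colc h unfolding col_def by blast
  qed
  define L0 where "L0 = map (\<lambda>k. (Min (col k), Max (col k))) [0..<m]"
  have len: "length L0 = m" unfolding L0_def by simp
  have nth0: "L0 ! k = (Min (col k), Max (col k))" if "k < m" for k unfolding L0_def using that by simp
  have Lne: "L0 \<noteq> []" using len unfolding m_def by auto
  have okc: "okc L0" unfolding okc_def len
  proof (intro allI impI)
    fix i assume i: "i < m"
    have "Max (col i) \<in> col i" using Max_in colfin colne[OF i] by blast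
    then have "Min (col i) \<le> Max (col i)" using Min_le colfin by blast
    then show "fst (L0 ! i) \<le> snd (L0 ! i)" using nth0[OF i] by simp
  qed
  have ovl: "ovl L0" unfolding ovl_def len
  proof (intro allI impI)
    fix k assume k: "Suc k < m"
    have "Suc k \<le> nat N" using k unfolding m_def by simp
    then have "int (Suc k) \<le> int (nat N)" by (simp only: of_nat_le_iff)
    then have kN: "int (Suc k) \<le> N" using N0 by simp
    obtain j where j: "(int (Suc k) - 1, j) \<in> P" "(int (Suc k), j) \<in> P"
      using cross[of "int (Suc k)"] kN by auto
    have "(int k, j) \<in> P" using j(1) by simp
    then show "fst (L0 ! Suc k) \<le> snd (L0 ! k) \<and> fst (L0 ! k) \<le> snd (L0 ! Suc k)"
      using colmem[of k j] colmem[of "Suc k" j] j(2) k nth0[of k] nth0[of "Suc k"] by auto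
  qed
  have cellsP: "cells L0 = P"
  proof (intro set_eqI iffI)
    fix p assume pc: "p \<in> cells L0"
    obtain i j where p: "p = (i, j)" by (cases p)
    have h: "0 \<le> i" "i < int m" "fst (L0 ! nat i) \<le> j" "j \<le> snd (L0 ! nat i)"
      using pc unfolding p mem_cells len by auto
    have k: "nat i < m" using h by auto
    have "Min (col (nat i)) \<le> j \<and> j \<le> Max (col (nat i))" using h nth0[OF k] by simp
    then have "(int (nat i), j) \<in> P" using colmem[OF k] by blast
    then show "p \<in> P" using p h by simp
  next
    fix p assume pP: "p \<in> P"
    obtain i j where p: "p = (i, j)" by (cases p)
    have i: "0 \<le> i" "i \<le> N" using nn[OF pP] leN[OF pP] p by auto
    then have k: "nat i < m" unfolding m_def by auto
    have "(int (nat i), j) \<in> P" using pP p i by simp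
    then have "Min (col (nat i)) \<le> j \<and> j \<le> Max (col (nat i))" using colmem[OF k] by blast
    then show "p \<in> cells L0" unfolding p mem_cells len using i k nth0[OF k] by simp
  qed
  have valid: "valid L0"
  proof (rule valid_from_rowconv[OF Lne okc ovl])
    fix j i1 i2 i assume "(i1, j) \<in> cells L0" "(i2, j) \<in> cells L0" "i1 \<le> i" "i \<le> i2"
    then show "(i, j) \<in> cells L0" unfolding cellsP using rowc by blast
  qed
  have sc: "snd ` P = {botmin L0..topmax L0}" using snd_cells[OF valid] cellsP by simp
  have "0 \<in> snd ` P" using py by force
  then have b1: "botmin L0 \<le> 0" "botmin L0 \<le> topmax L0" using sc by auto
  then have "botmin L0 \<in> snd ` P" using sc by auto
  then have b2: "0 \<le> botmin L0" using nn by auto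
  have bm: "botmin L0 = 0" using b1 b2 by simp
  define f where "f = fst (L0 ! 0)"
  define L where "L = sh (- f) L0"
  have hd0: "hd L0 = L0 ! 0" using Lne by (simp add: hd_conv_nth)
  have LCL: "L \<in> CL" unfolding CL_def nrm_def
  proof (intro CollectI conjI)
    show "valid L" unfolding L_def valid_sh by (rule valid)
    show "L \<noteq> []" unfolding L_def using Lne by simp
    show "fst (hd L) = 0" unfolding L_def hd_sh[OF Lne] hd0 f_def by simp
  qed
  have bL: "botmin L = - f" unfolding L_def botmin_sh[OF Lne] bm by simp
  have "Phi L = cells (sh (- botmin L) L)" unfolding Phi_def ..
  also have "\<dots> = cells L0" unfolding bL unfolding L_def by simp
  also have "\<dots> = P" by (rule cellsP)
  finally show ?thesis using LCL by blast
qed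

lemma CP_image: "CP = Phi ` CL"
proof
  show "CP \<subseteq> Phi ` CL"
  proof
    fix P assume "P \<in> CP"
    then obtain L where "L \<in> CL" "Phi L = P" using CP_surj by blast
    then show "P \<in> Phi ` CL" by (metis imageI)
  qed
  show "Phi ` CL \<subseteq> CP" using Phi_CP by blast
qed

theorem theorem3p3:
  "\<exists>\<epsilon>>0. \<forall>x y :: real. 0 < x \<and> x < \<epsilon> \<and> 0 < y \<and> y < \<epsilon> \<longrightarrow>
     (let zp = 1 / (1 + sqrt x); zm = 1 / (1 - sqrt x) in
      ((\<lambda>P. x ^ ncols P * y ^ nrows P) has_sum
         (2 * x * y / (x - (1 - y)^2) * Cu x y 1
          - sqrt x * y / ((1 + sqrt x) * (1 + sqrt x - y)) * Cu x y zp
          + sqrt x * y / ((1 - sqrt x) * (1 - sqrt x - y)) * Cu x y zm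
          + x * y^2 / (2 * (1 + sqrt x) * (1 + sqrt x - y)^2) * Cbu x y zp
          + x * y^2 / (2 * (1 - sqrt x) * (1 - sqrt x - y)^2) * Cbu x y zm
          - x * (1 - y) * y / (x - (1 - y)^2))) CP)"
proof (intro exI[of _ "1/100"] conjI allI impI)
  show "(0::real) < 1/100" by simp
  fix x y :: real
  assume h: "0 < x \<and> x < 1/100 \<and> 0 < y \<and> y < 1/100"
  then have x: "0 < x" "x < 1/100" and y: "0 < y" "y < 1/100" by auto
  note M = main_CL[OF x y]
  define V where "V = 2 * x * y / (x - (1 - y)^2) * Cu x y 1
          - sqrt x * y / ((1 + sqrt x) * (1 + sqrt x - y)) * Cu x y (1 / (1 + sqrt x))
          + sqrt x * y / ((1 - sqrt x) * (1 - sqrt x - y)) * Cu x y (1 / (1 - sqrt x))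
          + x * y^2 / (2 * (1 + sqrt x) * (1 + sqrt x - y)^2) * Cbu x y (1 / (1 + sqrt x))
          + x * y^2 / (2 * (1 - sqrt x) * (1 - sqrt x - y)^2) * Cbu x y (1 / (1 - sqrt x))
          - x * (1 - y) * y / (x - (1 - y)^2)"
  have M': "(w0 x y has_sum V) CL" using M unfolding V_def .
  have eq: "((\<lambda>P. x ^ ncols P * y ^ nrows P) \<circ> Phi) L = w0 x y L" if "L \<in> CL" for L
    using that by (simp add: Phi_size w0_def)
  have iff: "(((\<lambda>P. x ^ ncols P * y ^ nrows P) \<circ> Phi) has_sum V) CL \<longleftrightarrow> (w0 x y has_sum V) CL"
    by (rule has_sum_cong) (rule eq)
  have "(((\<lambda>P. x ^ ncols P * y ^ nrows P) \<circ> Phi) has_sum V) CL"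
    using iff M' by blast
  then have "((\<lambda>P. x ^ ncols P * y ^ nrows P) has_sum V) (Phi ` CL)"
    by (rule has_sum_reindex[OF Phi_inj, THEN iffD2])
  then have "((\<lambda>P. x ^ ncols P * y ^ nrows P) has_sum V) CP" unfolding CP_image .
  then show "let zp = 1 / (1 + sqrt x); zm = 1 / (1 - sqrt x) in
      ((\<lambda>P. x ^ ncols P * y ^ nrows P) has_sum
         (2 * x * y / (x - (1 - y)^2) * Cu x y 1
          - sqrt x * y / ((1 + sqrt x) * (1 + sqrt x - y)) * Cu x y zp
          + sqrt x * y / ((1 - sqrt x) * (1 - sqrt x - y)) * Cu x y zm
          + x * y^2 / (2 * (1 + sqrt x) * (1 + sqrt x - y)^2) * Cbu x y zp
          + x * y^2 / (2 * (1 - sqrt x) * (1 - sqrt x - y)^2) * Cbu x y zm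
          - x * (1 - y) * y / (x - (1 - y)^2))) CP"
    unfolding Let_def V_def .
qed


end
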